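(* Let $d\in\mathbb{Z}$ be square-free and let $E_d$ be the elliptic curve $dy^2=(x+13)(x+4)(x-12)$ over $\mathbb{Q}$. Then $E_d(\mathbb{Q})_{\mathrm{tors}}\cong\mathbb{Z}/4\mathbb{Z}\times\mathbb{Z}/2\mathbb{Z}$ if $d\in\{1,-1\}$, and $E_d(\mathbb{Q})_{\mathrm{tors}}\cong\mathbb{Z}/2\mathbb{Z}\times\mathbb{Z}/2\mathbb{Z}$ otherwise. The points of order $4$ are $(-8,\pm20)$ and $(32,\pm180)$ when $d=1$, and $(2,\pm30)$ and $(-28,\pm120)$ when $d=-1$.
   Context: $E_1$ is a model of the modular curve $X_0(15)$ and $E_d$ is its quadratic twist by $d$. *)

theory Defs
  imports Complex_Main "HOL-Algebra.Elementary_Groups" "HOL-Computational_Algebra.Squarefree"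
begin

text \<open>The curve E_d : d y^2 = (x+13)(x+4)(x-12) over the rationals.
  Points are represented as (rat \<times> rat) option, None being the point at infinity O.\<close>

definition ec_rhs :: "rat \<Rightarrow> rat" where
  "ec_rhs x = (x + 13) * (x + 4) * (x - 12)"

definition on_curve :: "int \<Rightarrow> (rat \<times> rat) option \<Rightarrow> bool" where
  "on_curve d P = (case P of None \<Rightarrow> True
                   | Some (x, y) \<Rightarrow> of_int d * y^2 = ec_rhs x)"

text \<open>Chord-tangent addition on d y^2 = x^3 + 5x^2 - 152x - 624 with O = None.\<close>
fun ec_add :: "int \<Rightarrow> (rat \<times> rat) option \<Rightarrow> (rat \<times> rat) option \<Rightarrow> (rat \<times> rat) option" where
  "ec_add d None Q = Q"
| "ec_add d (Some P) None = Some P"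
| "ec_add d (Some (x1, y1)) (Some (x2, y2)) =
     (if x1 = x2 \<and> y1 = - y2 then None
      else let l = (if x1 = x2 then (3 * x1^2 + 10 * x1 - 152) / (2 * of_int d * y1)
                    else (y2 - y1) / (x2 - x1));
               x3 = of_int d * l^2 - 5 - x1 - x2;
               y3 = l * (x1 - x3) - y1
           in Some (x3, y3))"

fun ec_mul :: "int \<Rightarrow> nat \<Rightarrow> (rat \<times> rat) option \<Rightarrow> (rat \<times> rat) option" where
  "ec_mul d 0 P = None"
| "ec_mul d (Suc n) P = ec_add d P (ec_mul d n P)"

definition ec_tors :: "int \<Rightarrow> ((rat \<times> rat) option) monoid" where
  "ec_tors d = \<lparr> carrier = {P. on_curve d P \<and> (\<exists>n>0. ec_mul d n P = None)},
                 monoid.mult = ec_add d, one = None \<rparr>"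

definition has_order :: "int \<Rightarrow> (rat \<times> rat) option \<Rightarrow> nat \<Rightarrow> bool" where
  "has_order d P n = (n > 0 \<and> ec_mul d n P = None \<and>
                      (\<forall>m. 0 < m \<and> m < n \<longrightarrow> ec_mul d m P \<noteq> None))"

end

theory Submission
  imports Defs
begin


definition fd :: "rat \<Rightarrow> rat" where "fd x = 3*x^2 + 10*x - 152"

lemma rhs_poly: "ec_rhs x = x^3 + 5*x^2 - 152*x - 624"
  by (simp add: ec_rhs_def algebra_simps power2_eq_square power3_eq_cube)

lemma rhs_root_fd: assumes "ec_rhs x = 0" shows "fd x \<noteq> 0"
proof -
  have "x = -13 \<or> x = -4 \<or> x = 12" using assms by (auto simp: ec_rhs_def)
  then show ?thesis by (auto simp: fd_def)
qed

definition lineid :: "int \<Rightarrow> rat \<Rightarrow> rat \<Rightarrow> rat \<Rightarrow> rat \<Rightarrow> rat \<Rightarrow> bool" where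
 "lineid d s m x1 x2 x3 \<longleftrightarrow> of_int d * s^2 - 5 = x1 + x2 + x3 \<and>
     2 * of_int d * s * m + 152 = -(x1*x2 + x1*x3 + x2*x3) \<and> of_int d * m^2 + 624 = x1*x2*x3"

lemma lineid_poly:
  assumes "lineid d s m x1 x2 x3"
  shows "of_int d * (s*x+m)^2 - ec_rhs x = -((x-x1)*(x-x2)*(x-x3))"
proof -
  have e1: "of_int d * s^2 = 5 + x1 + x2 + x3" and e2: "2 * of_int d * s * m = -152 -(x1*x2 + x1*x3 + x2*x3)"
   and e3: "of_int d * m^2 = x1*x2*x3 - 624" using assms by (auto simp: lineid_def)
  have "of_int d * (s*x+m)^2 = (of_int d * s^2) * x^2 + (2 * of_int d * s * m) * x + of_int d * m^2"
    by (simp add: algebra_simps power2_eq_square)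
  also have "\<dots> = (5 + x1 + x2 + x3) * x^2 + (-152 -(x1*x2 + x1*x3 + x2*x3)) * x + (x1*x2*x3 - 624)"
    by (simp only: e1 e2 e3)
  finally show ?thesis by (simp add: rhs_poly algebra_simps power2_eq_square power3_eq_cube)
qed

lemma lineid_on:
  assumes "lineid d s m x1 x2 x3"
  shows "of_int d * (s*x3+m)^2 = ec_rhs x3"
  using lineid_poly[OF assms, of x3] by simp

lemma lineid_fd:
  assumes "lineid d s m x1 x1 x3"
  shows "fd x1 = 2 * of_int d * s * (s*x1+m)"
proof -
  have e1: "of_int d * s^2 = 5 + x1 + x1 + x3" and e2: "2 * of_int d * s * m = -152 -(x1*x1 + x1*x3 + x1*x3)"
    using assms by (auto simp: lineid_def)
  have "2 * of_int d * s * (s*x1+m) = 2*x1*(of_int d * s^2) + 2 * of_int d * s * m"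
    by (simp add: algebra_simps power2_eq_square)
  also have "\<dots> = 2*x1*(5 + x1 + x1 + x3) + (-152 -(x1*x1 + x1*x3 + x1*x3))" by (simp only: e1 e2)
  finally show ?thesis by (simp add: fd_def algebra_simps power2_eq_square)
qed

lemma LL:
  assumes d: "d \<noteq> 0"
    and c1: "of_int d * y1^2 = ec_rhs x1" and c2: "of_int d * y2^2 = ec_rhs x2"
    and l1: "y1 = s*x1+m" and l2: "y2 = s*x2+m" and L: "lineid d s m x1 x2 x3"
  shows "ec_add d (Some (x1,y1)) (Some (x2,y2)) = Some (x3, -(s*x3+m))"
proof (cases "x1 = x2")
  case False
  have sl: "(y2-y1)/(x2-x1) = s" using False l1 l2 by (simp add: field_simps)
  have x3: "of_int d * s^2 - 5 - x1 - x2 = x3" using L by (simp add: lineid_def)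
  show ?thesis using False sl x3 by (simp add: Let_def algebra_simps l1)
next
  case True
  have yy: "y2 = y1" using True l1 l2 by simp
  have L': "lineid d s m x1 x1 x3" using L True by simp
  have fdx: "fd x1 = 2 * of_int d * s * y1" using lineid_fd[OF L'] l1 by simp
  have y0: "y1 \<noteq> 0"
  proof
    assume "y1 = 0"
    then have "ec_rhs x1 = 0" "fd x1 = 0" using c1 fdx by auto
    then show False using rhs_root_fd by blast
  qed
  have sl: "(3 * x1^2 + 10 * x1 - 152) / (2 * of_int d * y1) = s"
    using fdx y0 d by (simp add: fd_def field_simps)
  have x3: "of_int d * s^2 - 5 - x1 - x1 = x3" using L' by (simp add: lineid_def)
  show ?thesis using True yy y0 sl x3 by (simp add: Let_def algebra_simps l1)
qed

lemma lineid_perm: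
  assumes "lineid d s m x1 x2 x3"
  shows "lineid d s m x2 x1 x3" "lineid d s m x1 x3 x2" "lineid d s m x3 x2 x1"
        "lineid d s m x2 x3 x1" "lineid d s m x3 x1 x2"
  using assms by (auto simp: lineid_def algebra_simps)

lemma lineid_neg:
  assumes "lineid d s m x1 x2 x3" shows "lineid d (-s) (-m) x1 x2 x3"
  using assms by (simp add: lineid_def)

lemma LE:
  assumes d: "d \<noteq> 0"
    and c1: "of_int d * y1^2 = ec_rhs x1" and c2: "of_int d * y2^2 = ec_rhs x2"
    and ni: "\<not> (x1 = x2 \<and> y1 = - y2)"
  shows "\<exists>s m x3. y1 = s*x1+m \<and> y2 = s*x2+m \<and> lineid d s m x1 x2 x3"
proof (cases "x1 = x2")
  case False
  define s where "s = (y2-y1)/(x2-x1)"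
  define m where "m = y1 - s*x1"
  define x3 where "x3 = of_int d * s^2 - 5 - x1 - x2"
  define K1 where "K1 = 2 * of_int d * s * m + 152 + (x1*x2 + x1*x3 + x2*x3)"
  define K0 where "K0 = of_int d * m^2 + 624 - x1*x2*x3"
  have l1: "y1 = s*x1+m" by (simp add: m_def)
  have "s*(x2-x1) = y2 - y1" using False by (simp add: s_def)
  then have l2: "y2 = s*x2+m" by (simp add: m_def algebra_simps)
  have poly: "of_int d*(s*x+m)^2 - ec_rhs x + (x-x1)*(x-x2)*(x-x3) = K1*x + K0" for x
    by (simp add: K1_def K0_def x3_def rhs_poly algebra_simps power2_eq_square power3_eq_cube)
  have a1: "K1*x1 + K0 = 0" using poly[of x1] c1 l1 by simp
  have a2: "K1*x2 + K0 = 0" using poly[of x2] c2 l2 by simp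
  have "K1 * (x1 - x2) = (K1*x1 + K0) - (K1*x2 + K0)" by (simp add: algebra_simps)
  then have "K1 * (x1 - x2) = 0" using a1 a2 by simp
  then have k1: "K1 = 0" using False by simp
  then have k0: "K0 = 0" using a1 by simp
  have "lineid d s m x1 x2 x3" using k1 k0
    by (simp add: lineid_def K1_def K0_def x3_def algebra_simps)
  then show ?thesis using l1 l2 by blast
next
  case True
  have "of_int d * y2^2 = of_int d * y1^2" using c1 c2 True by simp
  then have "y2^2 = y1^2" using d by simp
  then have "y2 = y1 \<or> y2 = -y1" by (simp add: power2_eq_iff)
  then have yy: "y2 = y1" and y0: "y1 \<noteq> 0" using ni True by auto
  define s where "s = fd x1 / (2 * of_int d * y1)"
  define m where "m = y1 - s*x1"
  define x3 where "x3 = of_int d * s^2 - 5 - x1 - x1"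
  define K1 where "K1 = 2 * of_int d * s * m + 152 + (x1*x1 + x1*x3 + x1*x3)"
  define K0 where "K0 = of_int d * m^2 + 624 - x1*x1*x3"
  have l1: "y1 = s*x1+m" by (simp add: m_def)
  have sy: "2 * of_int d * s * y1 = fd x1" using d y0 by (simp add: s_def)
  have "K1 = 2 * of_int d * s * y1 - fd x1"
    by (simp add: K1_def m_def x3_def fd_def algebra_simps power2_eq_square)
  then have k1: "K1 = 0" using sy by simp
  have poly: "of_int d*(s*x+m)^2 - ec_rhs x + (x-x1)*(x-x1)*(x-x3) = K1*x + K0" for x
    by (simp add: K1_def K0_def x3_def rhs_poly algebra_simps power2_eq_square power3_eq_cube)
  have a1: "K1*x1 + K0 = 0" using poly[of x1] c1 l1 by simp
  then have k0: "K0 = 0" using k1 by simp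
  have "lineid d s m x1 x1 x3" using k1 k0
    by (simp add: lineid_def K1_def K0_def x3_def algebra_simps)
  then show ?thesis using l1 yy True by blast
qed

fun ec_neg :: "(rat \<times> rat) option \<Rightarrow> (rat \<times> rat) option" where
  "ec_neg None = None"
| "ec_neg (Some (x,y)) = Some (x, -y)"

lemma on_curve_Some: "on_curve d (Some (x,y)) \<longleftrightarrow> of_int d * y^2 = ec_rhs x"
  by (simp add: on_curve_def)

lemma add_inv: "ec_add d P (ec_neg P) = None"
  by (cases P) auto

lemma add_None_right[simp]: "ec_add d P None = P"
  by (cases P) auto

lemma neg_neg[simp]: "ec_neg (ec_neg P) = P"
  by (cases P) auto

lemma neg_on: "on_curve d P \<Longrightarrow> on_curve d (ec_neg P)"
  by (cases P) (auto simp: on_curve_def)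

lemma add_Some_cases:
  assumes d: "d \<noteq> 0" and c1: "of_int d * y1^2 = ec_rhs x1" and c2: "of_int d * y2^2 = ec_rhs x2"
  shows "(x1 = x2 \<and> y1 = -y2 \<and> ec_add d (Some (x1,y1)) (Some (x2,y2)) = None) \<or>
         (\<exists>s m x3. y1 = s*x1+m \<and> y2 = s*x2+m \<and> lineid d s m x1 x2 x3 \<and>
             ec_add d (Some (x1,y1)) (Some (x2,y2)) = Some (x3, -(s*x3+m)))"
proof (cases "x1 = x2 \<and> y1 = -y2")
  case True then show ?thesis by simp
next
  case False
  then obtain s m x3 where l: "y1 = s*x1+m" "y2 = s*x2+m" "lineid d s m x1 x2 x3"
    using LE[OF d c1 c2] by blast
  then show ?thesis using LL[OF d c1 c2 l] by blast
qed

lemma add_on: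
  assumes d: "d \<noteq> 0" and P: "on_curve d P" and Q: "on_curve d Q"
  shows "on_curve d (ec_add d P Q)"
proof (cases P)
  case None then show ?thesis using Q by simp
next
  case (Some a)
  obtain x1 y1 where a: "P = Some (x1,y1)" using Some by (cases a) auto
  show ?thesis
  proof (cases Q)
    case None then show ?thesis using P by simp
  next
    case (Some b)
    obtain x2 y2 where b: "Q = Some (x2,y2)" using Some by (cases b) auto
    have c1: "of_int d * y1^2 = ec_rhs x1" using P a by (simp add: on_curve_def)
    have c2: "of_int d * y2^2 = ec_rhs x2" using Q b by (simp add: on_curve_def)
    from add_Some_cases[OF d c1 c2] show ?thesis
    proof
      assume "x1 = x2 \<and> y1 = -y2 \<and> ec_add d (Some (x1,y1)) (Some (x2,y2)) = None"
      then show ?thesis using a b by (simp add: on_curve_def)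
    next
      assume "\<exists>s m x3. y1 = s*x1+m \<and> y2 = s*x2+m \<and> lineid d s m x1 x2 x3 \<and>
             ec_add d (Some (x1,y1)) (Some (x2,y2)) = Some (x3, -(s*x3+m))"
      then obtain s m x3 where "lineid d s m x1 x2 x3"
         "ec_add d (Some (x1,y1)) (Some (x2,y2)) = Some (x3, -(s*x3+m))" by blast
      moreover have "(- (s*x3) - m)^2 = (s*x3+m)^2" by algebra
      ultimately show ?thesis using a b lineid_on[of d s m x1 x2 x3] by (simp add: on_curve_def)
    qed
  qed
qed

lemma sq_neg_sum[simp]: "(- (a::rat) - b)^2 = (a+b)^2" by algebra

lemma on_curve_cases:
  assumes "on_curve d P"
  obtains "P = None" | x y where "P = Some (x,y)" "of_int d * y^2 = ec_rhs x"
  using assms by (cases P) (auto simp: on_curve_def)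

lemma add_comm:
  assumes d: "d \<noteq> 0" and P: "on_curve d P" and Q: "on_curve d Q"
  shows "ec_add d P Q = ec_add d Q P"
proof -
  { fix x1 y1 x2 y2 assume a: "P = Some (x1,y1)" "of_int d * y1^2 = ec_rhs x1"
       "Q = Some (x2,y2)" "of_int d * y2^2 = ec_rhs x2"
    from add_Some_cases[OF d a(2) a(4)] have ?thesis
    proof
      assume "x1 = x2 \<and> y1 = -y2 \<and> ec_add d (Some (x1,y1)) (Some (x2,y2)) = None"
      then show ?thesis using a by auto
    next
      assume "\<exists>s m x3. y1 = s*x1+m \<and> y2 = s*x2+m \<and> lineid d s m x1 x2 x3 \<and>
             ec_add d (Some (x1,y1)) (Some (x2,y2)) = Some (x3, -(s*x3+m))"
      then obtain s m x3 where l: "y1 = s*x1+m" "y2 = s*x2+m" "lineid d s m x1 x2 x3"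
         "ec_add d (Some (x1,y1)) (Some (x2,y2)) = Some (x3, -(s*x3+m))" by blast
      have "ec_add d (Some (x2,y2)) (Some (x1,y1)) = Some (x3, -(s*x3+m))"
        using LL[OF d a(4) a(2) l(2) l(1) lineid_perm(1)[OF l(3)]] .
      then show ?thesis using l a by simp
    qed }
  then show ?thesis using P Q by (cases rule: on_curve_cases[OF P]; cases rule: on_curve_cases[OF Q]) auto
qed

lemma neg_add:
  assumes d: "d \<noteq> 0" and P: "on_curve d P" and Q: "on_curve d Q"
  shows "ec_neg (ec_add d P Q) = ec_add d (ec_neg P) (ec_neg Q)"
proof -
  { fix x1 y1 x2 y2 assume a: "P = Some (x1,y1)" "of_int d * y1^2 = ec_rhs x1"
       "Q = Some (x2,y2)" "of_int d * y2^2 = ec_rhs x2"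
    have a2: "of_int d * (-y1)^2 = ec_rhs x1" "of_int d * (-y2)^2 = ec_rhs x2" using a by auto
    from add_Some_cases[OF d a(2) a(4)] have ?thesis
    proof
      assume "x1 = x2 \<and> y1 = -y2 \<and> ec_add d (Some (x1,y1)) (Some (x2,y2)) = None"
      then show ?thesis using a by auto
    next
      assume "\<exists>s m x3. y1 = s*x1+m \<and> y2 = s*x2+m \<and> lineid d s m x1 x2 x3 \<and>
             ec_add d (Some (x1,y1)) (Some (x2,y2)) = Some (x3, -(s*x3+m))"
      then obtain s m x3 where l: "y1 = s*x1+m" "y2 = s*x2+m" "lineid d s m x1 x2 x3"
         "ec_add d (Some (x1,y1)) (Some (x2,y2)) = Some (x3, -(s*x3+m))" by blast
      have "ec_add d (Some (x1,-y1)) (Some (x2,-y2)) = Some (x3, -((-s)*x3+(-m)))"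
        by (rule LL[OF d a2(1) a2(2) _ _ lineid_neg[OF l(3)]]) (use l in auto)
      then show ?thesis using l a by simp
    qed }
  then show ?thesis using P Q by (cases rule: on_curve_cases[OF P]; cases rule: on_curve_cases[OF Q]) auto
qed

lemma cancel:
  assumes d: "d \<noteq> 0" and P: "on_curve d P" and Q: "on_curve d Q"
  shows "ec_add d (ec_add d P Q) (ec_neg Q) = P"
proof -
  { fix x1 y1 x2 y2 assume a: "P = Some (x1,y1)" "of_int d * y1^2 = ec_rhs x1"
       "Q = Some (x2,y2)" "of_int d * y2^2 = ec_rhs x2"
    have a2: "of_int d * (-y2)^2 = ec_rhs x2" using a by auto
    from add_Some_cases[OF d a(2) a(4)] have ?thesis
    proof
      assume "x1 = x2 \<and> y1 = -y2 \<and> ec_add d (Some (x1,y1)) (Some (x2,y2)) = None"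
      then show ?thesis using a by auto
    next
      assume "\<exists>s m x3. y1 = s*x1+m \<and> y2 = s*x2+m \<and> lineid d s m x1 x2 x3 \<and>
             ec_add d (Some (x1,y1)) (Some (x2,y2)) = Some (x3, -(s*x3+m))"
      then obtain s m x3 where l: "y1 = s*x1+m" "y2 = s*x2+m" "lineid d s m x1 x2 x3"
         "ec_add d (Some (x1,y1)) (Some (x2,y2)) = Some (x3, -(s*x3+m))" by blast
      have c3: "of_int d * (-(s*x3+m))^2 = ec_rhs x3" using lineid_on[OF l(3)] by simp
      have "ec_add d (Some (x3,-(s*x3+m))) (Some (x2,-y2)) = Some (x1, -((-s)*x1+(-m)))"
        by (rule LL[OF d c3 a2 _ _ lineid_neg[OF lineid_perm(3)[OF l(3)]]]) (use l in auto)
      then show ?thesis using l a by simp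
    qed }
  then show ?thesis using P Q by (cases rule: on_curve_cases[OF P]; cases rule: on_curve_cases[OF Q]) (auto simp: add_inv)
qed

definition parab :: "int \<Rightarrow> rat \<Rightarrow> rat \<Rightarrow> rat \<Rightarrow> rat \<Rightarrow> rat \<Rightarrow> rat \<Rightarrow> rat \<Rightarrow> bool" where
 "parab d c c1 c0 xa xb xc xt \<longleftrightarrow>
   2*of_int d*c*c1 - 1 = - (of_int d*c^2) * (xa+xb+xc+xt) \<and>
   of_int d*(c1^2 + 2*c*c0) - 5 = (of_int d*c^2) * (xa*xb + xa*xc + xa*xt + xb*xc + xb*xt + xc*xt) \<and>
   2*of_int d*c1*c0 + 152 = - (of_int d*c^2) * (xa*xb*xc + xa*xb*xt + xa*xc*xt + xb*xc*xt) \<and>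
   of_int d*c0^2 + 624 = (of_int d*c^2) * (xa*xb*xc*xt)"

lemma parab_perm:
  assumes "parab d c c1 c0 xa xb xc xt"
  shows "parab d c c1 c0 xb xc xa xt"
  using assms unfolding parab_def by (simp add: algebra_simps)

lemma parab_on:
  assumes "parab d c c1 c0 xa xb xc xt"
  shows "of_int d * (c*xt^2 + c1*xt + c0)^2 = ec_rhs xt"
proof -
  let ?D = "of_int d :: rat"
  have q1: "2*?D*c*c1 = 1 - (?D*c^2) * (xa+xb+xc+xt)"
   and q2: "?D*(c1^2 + 2*c*c0) = 5 + (?D*c^2) * (xa*xb + xa*xc + xa*xt + xb*xc + xb*xt + xc*xt)"
   and q3: "2*?D*c1*c0 = -152 - (?D*c^2) * (xa*xb*xc + xa*xb*xt + xa*xc*xt + xb*xc*xt)"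
   and q4: "?D*c0^2 = -624 + (?D*c^2) * (xa*xb*xc*xt)"
    using assms unfolding parab_def by (simp_all add: algebra_simps)
  have "?D * (c*xt^2 + c1*xt + c0)^2 = (?D*c^2)*xt^4 + (2*?D*c*c1)*xt^3 + (?D*(c1^2 + 2*c*c0))*xt^2
        + (2*?D*c1*c0)*xt + ?D*c0^2"
    by (simp add: algebra_simps power2_eq_square power3_eq_cube power4_eq_xxxx)
  also have "\<dots> = (?D*c^2)*xt^4 + (1 - (?D*c^2) * (xa+xb+xc+xt))*xt^3
        + (5 + (?D*c^2) * (xa*xb + xa*xc + xa*xt + xb*xc + xb*xt + xc*xt))*xt^2
        + (-152 - (?D*c^2) * (xa*xb*xc + xa*xb*xt + xa*xc*xt + xb*xc*xt))*xt + (-624 + (?D*c^2) * (xa*xb*xc*xt))"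
    by (simp only: q1 q2 q3 q4)
  also have "\<dots> = ec_rhs xt"
    by (simp add: rhs_poly algebra_simps power2_eq_square power3_eq_cube power4_eq_xxxx)
  finally show ?thesis .
qed

lemma MainL:
  assumes d: "d \<noteq> 0"
    and ca: "of_int d * ya^2 = ec_rhs xa" and cb: "of_int d * yb^2 = ec_rhs xb"
    and cc: "of_int d * yc^2 = ec_rhs xc"
    and c: "c \<noteq> 0"
    and qa: "ya = c*xa^2 + c1*xa + c0" and qb: "yb = c*xb^2 + c1*xb + c0" and qc: "yc = c*xc^2 + c1*xc + c0"
    and P: "parab d c c1 c0 xa xb xc xt"
    and tan: "xa = xb \<Longrightarrow> 2 * of_int d * ya * (2*c*xa + c1) = fd xa"
  shows "ec_add d (ec_add d (Some (xa,ya)) (Some (xb,yb))) (Some (xc,yc)) = Some (xt, -(c*xt^2 + c1*xt + c0))"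
proof -
  let ?D = "of_int d :: rat"
  have D0: "?D \<noteq> 0" using d by simp
  have ni: "\<not> (xa = xb \<and> ya = -yb)"
  proof
    assume h: "xa = xb \<and> ya = -yb"
    then have "ya = yb" using qa qb by simp
    then have "ya = 0" using h by simp
    then have "ec_rhs xa = 0" "fd xa = 0" using ca tan h by auto
    then show False using rhs_root_fd by blast
  qed
  obtain s m xu where l: "ya = s*xa+m" "yb = s*xb+m" and L: "lineid d s m xa xb xu"
    using LE[OF d ca cb ni] by blast
  have U: "ec_add d (Some (xa,ya)) (Some (xb,yb)) = Some (xu, -(s*xu+m))"
    using LL[OF d ca cb l L] .
  have cu: "?D * (-(s*xu+m))^2 = ec_rhs xu" using lineid_on[OF L] by simp
  have cs: "c1 = s - c*(xa+xb) \<and> c0 = m + c*xa*xb"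
  proof (cases "xa = xb")
    case False
    have "(c*(xa+xb) + c1 - s) * (xa - xb) = (c*xa^2 + c1*xa + c0 - (s*xa+m)) - (c*xb^2 + c1*xb + c0 - (s*xb+m))"
      by (simp add: algebra_simps power2_eq_square)
    also have "\<dots> = 0" using qa qb l by simp
    finally have "c*(xa+xb) + c1 - s = 0" using False by simp
    then have e: "c1 = s - c*(xa+xb)" by simp
    have "c0 = ya - c*xa^2 - c1*xa" using qa by simp
    also have "\<dots> = m + c*xa*xb" unfolding e l(1) by (simp add: algebra_simps power2_eq_square)
    finally show ?thesis using e by simp
  next
    case True
    have ya0: "ya \<noteq> 0" using ni True qa qb by auto
    have "fd xa = 2 * ?D * s * ya" using lineid_fd[of d s m xa xu] L True l by simp
    then have "2 * ?D * ya * (2*c*xa + c1) = 2 * ?D * ya * s" using tan True by simp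
    then have e: "c1 = s - c*(xa+xb)" using ya0 D0 True by simp
    have "c0 = ya - c*xa^2 - c1*xa" using qa by simp
    also have "\<dots> = m + c*xa*xb" unfolding e l(1) using True by (simp add: algebra_simps power2_eq_square)
    finally show ?thesis using e by simp
  qed
  define S where "S = xc + xt"
  define Pp where "Pp = xc * xt"
  define s' where "s' = c1 + c*S"
  define m' where "m' = c0 - c*Pp"
  have L1: "?D*s^2 - 5 = xa + xb + xu" using L by (simp add: lineid_def)
  have Q1: "2*?D*c*c1 - 1 = - (?D*c^2) * (xa+xb+xc+xt)"
   and Q2: "?D*(c1^2 + 2*c*c0) - 5 = (?D*c^2) * (xa*xb + xa*xc + xa*xt + xb*xc + xb*xt + xc*xt)"
   and Q3: "2*?D*c1*c0 + 152 = - (?D*c^2) * (xa*xb*xc + xa*xb*xt + xa*xc*xt + xb*xc*xt)"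
   and Q4: "?D*c0^2 + 624 = (?D*c^2) * (xa*xb*xc*xt)"
    using P unfolding parab_def by simp_all
  have R1: "?D*c^2*S = 1 - 2*?D*c*s + ?D*c^2*(xa+xb)"
    using Q1 cs unfolding S_def by (simp add: algebra_simps power2_eq_square)
  have R2: "?D*c^2*Pp = xu + 2*?D*c*m + ?D*c^2*(xa*xb)"
  proof -
    have "?D*c^2*Pp = ?D*(c1^2 + 2*c*c0) - 5 - (?D*c^2)*(xa*xb) - (xa+xb)*(?D*c^2*S)"
      using Q2 unfolding S_def Pp_def by (simp add: algebra_simps)
    also have "\<dots> = ?D*((s - c*(xa+xb))^2 + 2*c*(m + c*xa*xb)) - 5 - (?D*c^2)*(xa*xb)
          - (xa+xb)*(1 - 2*?D*c*s + ?D*c^2*(xa+xb))" using cs R1 by simp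
    also have "\<dots> = (?D*s^2 - 5) + 2*?D*c*m + ?D*c^2*(xa*xb) - (xa+xb)"
      by (simp add: algebra_simps power2_eq_square)
    also have "\<dots> = xu + 2*?D*c*m + ?D*c^2*(xa*xb)" using L1 by simp
    finally show ?thesis .
  qed
  have mu: "-(s*xu+m) = s'*xu + m'"
  proof -
    have "?D*c*(s'*xu + m' + (s*xu+m)) = ?D*c*((s - c*(xa+xb) + c*S)*xu + m + c*xa*xb - c*Pp + s*xu + m)"
      using cs unfolding s'_def m'_def by simp
    also have "\<dots> = 2*?D*c*s*xu - ?D*c^2*(xa+xb)*xu + (?D*c^2*S)*xu + 2*?D*c*m + ?D*c^2*(xa*xb) - ?D*c^2*Pp"
      by (simp add: algebra_simps power2_eq_square)
    also have "\<dots> = 0" unfolding R1 R2 by (simp add: algebra_simps)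
    finally have "?D*c*(s'*xu + m' + (s*xu+m)) = 0" .
    then have "s'*xu + m' + (s*xu+m) = 0" using D0 c by simp
    then show ?thesis by simp
  qed
  have mc: "yc = s'*xc + m'" unfolding qc s'_def m'_def S_def Pp_def by (simp add: algebra_simps power2_eq_square)
  have mt: "s'*xt + m' = c*xt^2 + c1*xt + c0" unfolding s'_def m'_def S_def Pp_def by (simp add: algebra_simps power2_eq_square)
  have M1: "?D*s'^2 - 5 = xu + xc + xt"
  proof -
    have w: "?D*c*(c*(S - (xa+xb))) = 1 - 2*?D*c*s" using R1 by (simp add: algebra_simps power2_eq_square)
    have ss: "s' = s + c*(S - (xa+xb))" using cs unfolding s'_def by (simp add: algebra_simps)
    have "c*(?D*s'^2 - 5 - xu - xc - xt) = c*(?D*(s + c*(S - (xa+xb)))^2 - 5 - xu - S)"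
      unfolding ss S_def by (simp add: algebra_simps)
    also have "\<dots> = c*((?D*s^2 - 5) - (xa+xb) - xu) + (c*(S - (xa+xb)))*(2*?D*c*s + ?D*c*(c*(S - (xa+xb))) - 1)"
      by (simp add: algebra_simps power2_eq_square)
    also have "\<dots> = 0" unfolding w L1 by simp
    finally show ?thesis using c by simp
  qed
  have M2: "2*?D*s'*m' + 152 = -(xu*xc + xu*xt + xc*xt)"
  proof -
    have xr: "xu = ?D*c^2*(xa*xb + Pp) - 2*?D*c*c0" using R2 cs by (simp add: algebra_simps power2_eq_square)
    have "2*?D*s'*m' + 152 = (2*?D*c1*c0 + 152) - 2*?D*c*c1*Pp + 2*?D*c*c0*S - 2*?D*c^2*S*Pp"
      unfolding s'_def m'_def by (simp add: algebra_simps power2_eq_square)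
    also have "\<dots> = - (?D*c^2)*((xa*xb)*S + (xa+xb)*Pp) - 2*?D*c*c1*Pp + 2*?D*c*c0*S - 2*?D*c^2*S*Pp"
      using Q3 unfolding S_def Pp_def by (simp add: algebra_simps)
    also have "\<dots> = -(xu*S + Pp) + Pp*(1 - 2*?D*c*c1 - (?D*c^2)*(xa+xb+xc+xt))"
      unfolding xr S_def by (simp add: algebra_simps power2_eq_square)
    also have "\<dots> = -(xu*S + Pp)" using Q1 by simp
    finally show ?thesis unfolding S_def Pp_def by (simp add: algebra_simps)
  qed
  have M3: "?D*m'^2 + 624 = xu*xc*xt"
  proof -
    have xr: "xu = ?D*c^2*(xa*xb + Pp) - 2*?D*c*c0" using R2 cs by (simp add: algebra_simps power2_eq_square)
    have "?D*m'^2 + 624 = (?D*c0^2 + 624) - 2*?D*c*c0*Pp + ?D*c^2*Pp^2"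
      unfolding m'_def by (simp add: algebra_simps power2_eq_square)
    also have "\<dots> = Pp * (?D*c^2*(xa*xb + Pp) - 2*?D*c*c0)"
      using Q4 unfolding Pp_def by (simp add: algebra_simps power2_eq_square)
    also have "\<dots> = Pp * xu" using xr by simp
    finally show ?thesis unfolding Pp_def by (simp add: algebra_simps)
  qed
  have LM: "lineid d s' m' xu xc xt" using M1 M2 M3 by (simp add: lineid_def)
  have "ec_add d (Some (xu, -(s*xu+m))) (Some (xc,yc)) = Some (xt, -(s'*xt+m'))"
    using LL[OF d cu cc mu mc LM] .
  then show ?thesis using U mt by simp
qed

lemma parab_of_line:
  assumes L: "lineid d s m x1 x2 xu"
    and R1: "of_int d*c^2*(x3 + xt) = 1 - 2*of_int d*c*s + of_int d*c^2*(x1+x2)"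
    and R2: "of_int d*c^2*(x3*xt) = xu + 2*of_int d*c*m + of_int d*c^2*(x1*x2)"
  shows "parab d c (s - c*(x1+x2)) (m + c*x1*x2) x1 x2 x3 xt"
proof -
  let ?D = "of_int d :: rat"
  have L1: "?D*s^2 = 5 + x1 + x2 + xu" and L2: "2*?D*s*m = -152 - (x1*x2 + x1*xu + x2*xu)"
    and L3: "?D*m^2 = x1*x2*xu - 624" using L by (auto simp: lineid_def)
  have Q1: "2*?D*c*(s - c*(x1+x2)) - 1 = - (?D*c^2) * (x1+x2+x3+xt)"
  proof -
    have "- (?D*c^2) * (x1+x2+x3+xt) = - (?D*c^2*(x3 + xt)) - ?D*c^2*(x1+x2)" by (simp add: algebra_simps)
    also have "\<dots> = 2*?D*c*(s - c*(x1+x2)) - 1" unfolding R1 by (simp add: algebra_simps power2_eq_square)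
    finally show ?thesis by simp
  qed
  have Q2: "?D*((s - c*(x1+x2))^2 + 2*c*(m + c*x1*x2)) - 5 = (?D*c^2) * (x1*x2 + x1*x3 + x1*xt + x2*x3 + x2*xt + x3*xt)"
  proof -
    have "(?D*c^2) * (x1*x2 + x1*x3 + x1*xt + x2*x3 + x2*xt + x3*xt) =
        ?D*c^2*(x1*x2) + (x1+x2)*(?D*c^2*(x3 + xt)) + ?D*c^2*(x3*xt)" by (simp add: algebra_simps)
    also have "\<dots> = ?D*c^2*(x1*x2) + (x1+x2)*(1 - 2*?D*c*s + ?D*c^2*(x1+x2)) + (xu + 2*?D*c*m + ?D*c^2*(x1*x2))"
      unfolding R1 R2 ..
    also have "\<dots> = ?D*((s - c*(x1+x2))^2 + 2*c*(m + c*x1*x2)) - 5 + (5 + x1 + x2 + xu - ?D*s^2)"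
      by (simp add: algebra_simps power2_eq_square)
    finally show ?thesis using L1 by simp
  qed
  have Q3: "2*?D*(s - c*(x1+x2))*(m + c*x1*x2) + 152 = - (?D*c^2) * (x1*x2*x3 + x1*x2*xt + x1*x3*xt + x2*x3*xt)"
  proof -
    have "- (?D*c^2) * (x1*x2*x3 + x1*x2*xt + x1*x3*xt + x2*x3*xt) =
         - (x1*x2)*(?D*c^2*(x3 + xt)) - (x1+x2)*(?D*c^2*(x3*xt))" by (simp add: algebra_simps)
    also have "\<dots> = - (x1*x2)*(1 - 2*?D*c*s + ?D*c^2*(x1+x2)) - (x1+x2)*(xu + 2*?D*c*m + ?D*c^2*(x1*x2))"
      unfolding R1 R2 ..
    also have "\<dots> = 2*?D*(s - c*(x1+x2))*(m + c*x1*x2) + 152 - (2*?D*s*m + 152 + (x1*x2 + x1*xu + x2*xu))"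
      by (simp add: algebra_simps power2_eq_square)
    finally show ?thesis using L2 by simp
  qed
  have Q4: "?D*(m + c*x1*x2)^2 + 624 = (?D*c^2) * (x1*x2*x3*xt)"
  proof -
    have "(?D*c^2) * (x1*x2*x3*xt) = (x1*x2)*(?D*c^2*(x3*xt))" by (simp add: algebra_simps)
    also have "\<dots> = (x1*x2)*(xu + 2*?D*c*m + ?D*c^2*(x1*x2))" unfolding R2 ..
    also have "\<dots> = ?D*(m + c*x1*x2)^2 + 624 + (x1*x2*xu - 624 - ?D*m^2)"
      by (simp add: algebra_simps power2_eq_square)
    finally show ?thesis using L3 by simp
  qed
  show ?thesis using Q1 Q2 Q3 Q4 unfolding parab_def by simp
qed

lemma parab_hroot:
  assumes d: "d \<noteq> 0" and c: "c \<noteq> 0" and L: "lineid d s m x1 x2 xu"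
    and h: "of_int d*c^2*(x3-x1)*(x3-x2) + 2*of_int d*c*(s*x3+m) - (x3 - xu) = 0"
    and xt: "xt = (1 - 2*of_int d*c*s + of_int d*c^2*(x1+x2))/(of_int d*c^2) - x3"
  shows "parab d c (s - c*(x1+x2)) (m + c*x1*x2) x1 x2 x3 xt"
proof -
  let ?D = "of_int d :: rat"
  have Dc: "?D*c^2 \<noteq> 0" using d c by simp
  have R1: "?D*c^2*(x3 + xt) = 1 - 2*?D*c*s + ?D*c^2*(x1+x2)"
    using Dc unfolding xt by (simp add: field_simps)
  have "?D*c^2*(x3*xt) = x3*(?D*c^2*(x3 + xt)) - ?D*c^2*x3^2" by (simp add: algebra_simps power2_eq_square)
  also have "\<dots> = x3*(1 - 2*?D*c*s + ?D*c^2*(x1+x2)) - ?D*c^2*x3^2" unfolding R1 ..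
  also have "\<dots> = xu + 2*?D*c*m + ?D*c^2*(x1*x2) - (?D*c^2*(x3-x1)*(x3-x2) + 2*?D*c*(s*x3+m) - (x3 - xu))"
    by (simp add: algebra_simps power2_eq_square)
  finally have R2: "?D*c^2*(x3*xt) = xu + 2*?D*c*m + ?D*c^2*(x1*x2)" using h by simp
  show ?thesis by (rule parab_of_line[OF L R1 R2])
qed

definition Hs :: "int \<Rightarrow> rat \<times> rat \<Rightarrow> rat \<times> rat \<Rightarrow> rat \<times> rat \<Rightarrow> rat \<Rightarrow> rat \<Rightarrow> rat \<Rightarrow> rat \<Rightarrow> bool" where
 "Hs d A B C c c1 c0 xt \<longleftrightarrow> c \<noteq> 0 \<and>
    snd A = c*(fst A)^2 + c1*(fst A) + c0 \<and> snd B = c*(fst B)^2 + c1*(fst B) + c0 \<and>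
    snd C = c*(fst C)^2 + c1*(fst C) + c0 \<and> parab d c c1 c0 (fst A) (fst B) (fst C) xt \<and>
    (fst A = fst B \<longrightarrow> 2 * of_int d * snd A * (2*c*fst A + c1) = fd (fst A)) \<and>
    (fst B = fst C \<longrightarrow> 2 * of_int d * snd B * (2*c*fst B + c1) = fd (fst B)) \<and>
    (fst A = fst C \<longrightarrow> 2 * of_int d * snd A * (2*c*fst A + c1) = fd (fst A))"

lemma Hs_rot: "Hs d A B C c c1 c0 xt \<Longrightarrow> Hs d B C A c c1 c0 xt"
  unfolding Hs_def using parab_perm by auto

lemma parab_swap: "parab d c c1 c0 xa xb xc xt \<Longrightarrow> parab d c c1 c0 xb xa xc xt"
  unfolding parab_def by (simp add: algebra_simps)

lemma Hs_swap: "Hs d A B C c c1 c0 xt \<Longrightarrow> Hs d B A C c c1 c0 xt"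
  unfolding Hs_def using parab_swap by auto

lemma Hs_assoc:
  assumes d: "d \<noteq> 0" and A: "on_curve d (Some A)" and B: "on_curve d (Some B)" and C: "on_curve d (Some C)"
    and H: "Hs d A B C c c1 c0 xt"
  shows "ec_add d (ec_add d (Some A) (Some B)) (Some C) = ec_add d (Some A) (ec_add d (Some B) (Some C))"
proof -
  obtain xa ya xb yb xc yc where ab: "A = (xa,ya)" "B = (xb,yb)" "C = (xc,yc)" by (cases A, cases B, cases C) auto
  have ca: "of_int d * ya^2 = ec_rhs xa" and cb: "of_int d * yb^2 = ec_rhs xb" and cc: "of_int d * yc^2 = ec_rhs xc"
    using A B C ab by (auto simp: on_curve_def)
  have H1: "ec_add d (ec_add d (Some A) (Some B)) (Some C) = Some (xt, -(c*xt^2 + c1*xt + c0))"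
    using H ab by (intro MainL[OF d ca cb cc, simplified ab[symmetric]]) (auto simp: Hs_def)
  have H' : "Hs d B C A c c1 c0 xt" using Hs_rot[OF H] .
  have H2: "ec_add d (ec_add d (Some B) (Some C)) (Some A) = Some (xt, -(c*xt^2 + c1*xt + c0))"
    using H' ab by (intro MainL[OF d cb cc ca, simplified ab[symmetric]]) (auto simp: Hs_def)
  have BC: "on_curve d (ec_add d (Some B) (Some C))" using add_on[OF d B C] .
  show ?thesis using H1 H2 add_comm[OF d A BC] by simp
qed

lemma E1:
  assumes d: "d \<noteq> 0" and c3: "of_int d * y3^2 = ec_rhs x3"
    and l1: "y1 = s*x1+m" and l2: "y2 = s*x2+m" and L: "lineid d s m x1 x2 xu"
    and n1: "x3 \<noteq> x1" and n2: "x3 \<noteq> x2" and ny: "y3 \<noteq> s*x3+m"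
  shows "\<exists>c c1 c0 xt. Hs d (x1,y1) (x2,y2) (x3,y3) c c1 c0 xt"
proof -
  let ?D = "of_int d :: rat"
  define c where "c = (y3 - (s*x3+m))/((x3-x1)*(x3-x2))"
  have Pi: "(x3-x1)*(x3-x2) \<noteq> 0" using n1 n2 by simp
  have cdef: "y3 = (s*x3+m) + c*((x3-x1)*(x3-x2))" using Pi unfolding c_def by simp
  have c0: "c \<noteq> 0" using ny cdef by auto
  define xt where "xt = (1 - 2*?D*c*s + ?D*c^2*(x1+x2))/(?D*c^2) - x3"
  have "(x3-x1)*(x3-x2) * (?D*c^2*(x3-x1)*(x3-x2) + 2*?D*c*(s*x3+m) - (x3 - xu))
        = -((x3-x1)*(x3-x2)*(x3-xu)) + 2*?D*c*(s*x3+m)*((x3-x1)*(x3-x2)) + ?D*c^2*((x3-x1)*(x3-x2))^2"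
    by (simp add: algebra_simps power2_eq_square)
  also have "\<dots> = (?D*(s*x3+m)^2 - ec_rhs x3) + 2*?D*c*(s*x3+m)*((x3-x1)*(x3-x2)) + ?D*c^2*((x3-x1)*(x3-x2))^2"
    using lineid_poly[OF L, of x3] by simp
  also have "\<dots> = ?D*y3^2 - ec_rhs x3" unfolding cdef by (simp add: algebra_simps power2_eq_square)
  also have "\<dots> = 0" using c3 by simp
  finally have h: "?D*c^2*(x3-x1)*(x3-x2) + 2*?D*c*(s*x3+m) - (x3 - xu) = 0" using Pi by simp
  have P: "parab d c (s - c*(x1+x2)) (m + c*x1*x2) x1 x2 x3 xt"
    by (rule parab_hroot[OF d c0 L h xt_def])
  have qa: "y1 = c*x1^2 + (s - c*(x1+x2))*x1 + (m + c*x1*x2)" using l1 by (simp add: algebra_simps power2_eq_square)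
  have qb: "y2 = c*x2^2 + (s - c*(x1+x2))*x2 + (m + c*x1*x2)" using l2 by (simp add: algebra_simps power2_eq_square)
  have qc: "y3 = c*x3^2 + (s - c*(x1+x2))*x3 + (m + c*x1*x2)" using cdef by (simp add: algebra_simps power2_eq_square)
  have tan: "x1 = x2 \<longrightarrow> 2 * ?D * y1 * (2*c*x1 + (s - c*(x1+x2))) = fd x1"
  proof
    assume e: "x1 = x2"
    have "fd x1 = 2 * ?D * s * y1" using lineid_fd[of d s m x1 xu] L e l1 by simp
    then show "2 * ?D * y1 * (2*c*x1 + (s - c*(x1+x2))) = fd x1" using e by (simp add: algebra_simps)
  qed
  have "Hs d (x1,y1) (x2,y2) (x3,y3) c (s - c*(x1+x2)) (m + c*x1*x2) xt"
    unfolding Hs_def using c0 qa qb qc P tan n1 n2 by auto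
  then show ?thesis by blast
qed

lemma E2:
  assumes d: "d \<noteq> 0" and y0: "y1 \<noteq> 0"
    and l1: "y1 = s*x1+m" and L: "lineid d s m x1 x1 xu" and nu: "xu \<noteq> x1"
  shows "\<exists>c c1 c0 xt. Hs d (x1,y1) (x1,y1) (x1,y1) c c1 c0 xt"
proof -
  let ?D = "of_int d :: rat"
  define c where "c = (x1 - xu)/(2*?D*y1)"
  have c0: "c \<noteq> 0" using nu y0 d unfolding c_def by simp
  have cy: "2*?D*c*y1 = x1 - xu" using y0 d unfolding c_def by simp
  define xt where "xt = (1 - 2*?D*c*s + ?D*c^2*(x1+x1))/(?D*c^2) - x1"
  have h: "?D*c^2*(x1-x1)*(x1-x1) + 2*?D*c*(s*x1+m) - (x1 - xu) = 0" using cy l1 by simp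
  have P: "parab d c (s - c*(x1+x1)) (m + c*x1*x1) x1 x1 x1 xt"
    by (rule parab_hroot[OF d c0 L h xt_def])
  have qa: "y1 = c*x1^2 + (s - c*(x1+x1))*x1 + (m + c*x1*x1)" using l1 by (simp add: algebra_simps power2_eq_square)
  have "fd x1 = 2 * ?D * s * y1" using lineid_fd[of d s m x1 xu] L l1 by simp
  then have tan: "2 * ?D * y1 * (2*c*x1 + (s - c*(x1+x1))) = fd x1" by (simp add: algebra_simps)
  have "Hs d (x1,y1) (x1,y1) (x1,y1) c (s - c*(x1+x1)) (m + c*x1*x1) xt"
    unfolding Hs_def using c0 qa P tan by auto
  then show ?thesis by blast
qed

lemma add_None_left[simp]: "ec_add d None Q = Q" by simp

lemma cancel2:
  assumes d: "d \<noteq> 0" and A: "on_curve d A" and C: "on_curve d C"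
  shows "ec_add d A (ec_add d (ec_neg A) C) = C"
proof -
  have nA: "on_curve d (ec_neg A)" using neg_on[OF A] .
  have "ec_add d (ec_add d C (ec_neg A)) (ec_neg (ec_neg A)) = C" using cancel[OF d C nA] .
  then have "ec_add d (ec_add d C (ec_neg A)) A = C" by simp
  moreover have "ec_add d (ec_neg A) C = ec_add d C (ec_neg A)" using add_comm[OF d nA C] .
  moreover have "ec_add d A (ec_add d C (ec_neg A)) = ec_add d (ec_add d C (ec_neg A)) A"
    using add_comm[OF d A add_on[OF d C nA]] .
  ultimately show ?thesis by simp
qed

lemma add_eq_None:
  assumes "ec_add d A B = None" shows "B = ec_neg A"
  using assms by (cases A; cases B) (auto simp: Let_def split: if_splits)

lemma neg_sum_sym:
  assumes d: "d \<noteq> 0" and P: "on_curve d P" and Q: "on_curve d Q" and R: "on_curve d R"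
    and e: "ec_add d Q R = ec_neg P"
  shows "R = ec_neg (ec_add d P Q)"
proof -
  have "R = ec_add d (ec_neg Q) (ec_add d Q R)"
    using cancel2[OF d neg_on[OF Q] R] by simp
  also have "\<dots> = ec_add d (ec_neg Q) (ec_neg P)" using e by simp
  also have "\<dots> = ec_neg (ec_add d Q P)" using neg_add[OF d Q P] by simp
  also have "\<dots> = ec_neg (ec_add d P Q)" using add_comm[OF d P Q] by simp
  finally show ?thesis .
qed

theorem ec_assoc:
  assumes d: "d \<noteq> 0" and P: "on_curve d P" and Q: "on_curve d Q" and R: "on_curve d R"
  shows "ec_add d (ec_add d P Q) R = ec_add d P (ec_add d Q R)"
proof -
  have PQ: "on_curve d (ec_add d P Q)" using add_on[OF d P Q] .
  have QR: "on_curve d (ec_add d Q R)" using add_on[OF d Q R] .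
  consider (a) "Q = ec_neg P" | (b) "R = ec_neg Q" | (c) "R = ec_neg P" | (e) "R = ec_neg (ec_add d P Q)"
    | (g) "Q \<noteq> ec_neg P" "R \<noteq> ec_neg Q" "R \<noteq> ec_neg P" "R \<noteq> ec_neg (ec_add d P Q)" by blast
  then show ?thesis
  proof cases
    case a then show ?thesis using cancel2[OF d P R] by (simp add: add_inv)
  next
    case b then show ?thesis using cancel[OF d P Q] by (simp add: add_inv)
  next
    case c
    have "ec_add d (ec_add d P Q) R = ec_add d (ec_add d Q P) (ec_neg P)" using c add_comm[OF d P Q] by simp
    also have "\<dots> = Q" using cancel[OF d Q P] .
    finally have l: "ec_add d (ec_add d P Q) R = Q" .
    have "ec_add d Q R = ec_add d (ec_neg P) Q" using c add_comm[OF d Q neg_on[OF P]] by simp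
    then have "ec_add d P (ec_add d Q R) = Q" using cancel2[OF d P Q] by simp
    then show ?thesis using l by simp
  next
    case e
    have "ec_add d Q R = ec_add d Q (ec_add d (ec_neg Q) (ec_neg P))"
      using e neg_add[OF d P Q] add_comm[OF d neg_on[OF P] neg_on[OF Q]] by simp
    also have "\<dots> = ec_neg P" using cancel2[OF d Q neg_on[OF P]] .
    finally have "ec_add d Q R = ec_neg P" .
    then show ?thesis using e by (simp add: add_inv)
  next
    case g
    show ?thesis
    proof (cases P)
      case None then show ?thesis by simp
    next
      case (Some pa)
      show ?thesis
      proof (cases Q)
        case None then show ?thesis by simp
      next
        case (Some qa)
        show ?thesis
        proof (cases R)
          case None then show ?thesis by simp
        next
          case (Some ra)
          obtain xa ya xb yb xc yc where ab: "P = Some (xa,ya)" "Q = Some (xb,yb)" "R = Some (xc,yc)"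
            using \<open>P = Some pa\<close> \<open>Q = Some qa\<close> \<open>R = Some ra\<close> by (cases pa, cases qa, cases ra) auto
          have ca: "of_int d * ya^2 = ec_rhs xa" and cb: "of_int d * yb^2 = ec_rhs xb" and cc: "of_int d * yc^2 = ec_rhs xc"
            using P Q R ab by (auto simp: on_curve_def)
          have nab: "\<not> (xa = xb \<and> ya = -yb)" using g(1) ab by auto
          have nbc: "\<not> (xb = xc \<and> yb = -yc)" using g(2) ab by auto
          have nac: "\<not> (xa = xc \<and> ya = -yc)" using g(3) ab by auto
          have off: "yz \<noteq> s*xz+m"
            if L: "lineid d s m x1 x2 xu" and l1: "y1 = s*x1+m" and l2: "y2 = s*x2+m"
              and cz: "of_int d * yz^2 = ec_rhs xz" and n1: "xz \<noteq> x1" and n2: "xz \<noteq> x2"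
              and c1: "of_int d * y1^2 = ec_rhs x1" and c2: "of_int d * y2^2 = ec_rhs x2"
              and nn: "Some (xz,yz) \<noteq> ec_neg (ec_add d (Some (x1,y1)) (Some (x2,y2)))"
            for s m x1 x2 xu y1 y2 xz yz
          proof
            assume yz: "yz = s*xz+m"
            have "0 = -((xz-x1)*(xz-x2)*(xz-xu))" using lineid_poly[OF L, of xz] cz yz by simp
            then have "xz = xu" using n1 n2 by simp
            moreover have "ec_add d (Some (x1,y1)) (Some (x2,y2)) = Some (xu, -(s*xu+m))"
              using LL[OF d c1 c2 l1 l2 L] .
            ultimately show False using nn yz by simp
          qed
          have HH: "\<exists>c c1 c0 xt. Hs d (xa,ya) (xb,yb) (xc,yc) c c1 c0 xt"
          proof (cases "xc \<noteq> xa \<and> xc \<noteq> xb")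
            case True
            obtain s m xu where l: "ya = s*xa+m" "yb = s*xb+m" and L: "lineid d s m xa xb xu"
              using LE[OF d ca cb nab] by blast
            have "yc \<noteq> s*xc+m" using off[OF L l cc _ _ ca cb] True g(4) ab by auto
            then show ?thesis using E1[OF d cc l L] True by auto
          next
            case F1: False
            show ?thesis
            proof (cases "xa \<noteq> xb \<and> xa \<noteq> xc")
              case True
              obtain s m xu where l: "yb = s*xb+m" "yc = s*xc+m" and L: "lineid d s m xb xc xu"
                using LE[OF d cb cc nbc] by blast
              have "P \<noteq> ec_neg (ec_add d Q R)"
                using neg_sum_sym[OF d P Q R] g(4) by auto
              then have "ya \<noteq> s*xa+m" using off[OF L l ca _ _ cb cc] True ab by auto
              then obtain c c1 c0 xt where "Hs d (xb,yb) (xc,yc) (xa,ya) c c1 c0 xt"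
                using E1[OF d ca l L] True by auto
              then have "Hs d (xc,yc) (xa,ya) (xb,yb) c c1 c0 xt" by (rule Hs_rot)
              then have "Hs d (xa,ya) (xb,yb) (xc,yc) c c1 c0 xt" by (rule Hs_rot)
              then show ?thesis by blast
            next
              case F2: False
              show ?thesis
              proof (cases "xb \<noteq> xa \<and> xb \<noteq> xc")
                case True
                have nac': "\<not> (xa = xc \<and> ya = -yc)" using nac .
                obtain s m xu where l: "ya = s*xa+m" "yc = s*xc+m" and L: "lineid d s m xa xc xu"
                  using LE[OF d ca cc nac'] by blast
                have "ec_add d P R = ec_neg Q \<Longrightarrow> False"
                proof -
                  assume e: "ec_add d P R = ec_neg Q"
                  have "R = ec_neg (ec_add d Q P)" using neg_sum_sym[OF d Q P R] e by simp
                  then show False using g(4) add_comm[OF d P Q] by simp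
                qed
                then have "Q \<noteq> ec_neg (ec_add d P R)" by auto
                then have "yb \<noteq> s*xb+m" using off[OF L l cb _ _ ca cc] True ab by auto
                then obtain c c1 c0 xt where "Hs d (xa,ya) (xc,yc) (xb,yb) c c1 c0 xt"
                  using E1[OF d cb l L] True by auto
                then have "Hs d (xc,yc) (xa,ya) (xb,yb) c c1 c0 xt" by (rule Hs_swap)
                then have "Hs d (xa,ya) (xb,yb) (xc,yc) c c1 c0 xt" by (rule Hs_rot)
                then show ?thesis by blast
              next
                case F3: False
                have x: "xb = xa" "xc = xa" using F1 F2 F3 by auto
                have "yb^2 = ya^2" using ca cb x d by (metis mult_cancel_left of_int_eq_0_iff)
                then have "yb = ya \<or> yb = -ya" by (simp add: power2_eq_iff)
                then have yb: "yb = ya" and ya0: "ya \<noteq> 0" using nab x by auto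
                have "yc^2 = ya^2" using ca cc x d by (metis mult_cancel_left of_int_eq_0_iff)
                then have "yc = ya \<or> yc = -ya" by (simp add: power2_eq_iff)
                then have yc: "yc = ya" using nac x by auto
                obtain s m xu where l: "ya = s*xa+m" "ya = s*xa+m" and L: "lineid d s m xa xa xu"
                  using LE[of d ya xa ya xa] d ca ya0 by auto
                have "ec_add d (Some (xa,ya)) (Some (xa,ya)) = Some (xu, -(s*xu+m))"
                  using LL[OF d ca ca l L] .
                then have nu: "xu \<noteq> xa" using g(4) ab x yb yc l by auto
                show ?thesis using E2[OF d ya0 l(1) L nu] x yb yc by simp
              qed
            qed
          qed
          then obtain c c1 c0 xt where H: "Hs d (xa,ya) (xb,yb) (xc,yc) c c1 c0 xt" by blast
          show ?thesis using Hs_assoc[OF d _ _ _ H] P Q R ab by simp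
        qed
      qed
    qed
  qed
qed


definition ec_group :: "int \<Rightarrow> ((rat\<times>rat) option) monoid" where
  "ec_group d = \<lparr>carrier = {P. on_curve d P}, monoid.mult = ec_add d, one = None\<rparr>"

lemma ec_group_simps[simp]:
  "carrier (ec_group d) = {P. on_curve d P}" "monoid.mult (ec_group d) = ec_add d" "one (ec_group d) = None"
  by (simp_all add: ec_group_def)

lemma ec_comm_group: assumes d: "d \<noteq> 0" shows "comm_group (ec_group d)"
proof (rule comm_groupI)
  fix x y assume "x \<in> carrier (ec_group d)" "y \<in> carrier (ec_group d)"
  then show "x \<otimes>\<^bsub>ec_group d\<^esub> y \<in> carrier (ec_group d)" using add_on[OF d] by simp
next
  show "\<one>\<^bsub>ec_group d\<^esub> \<in> carrier (ec_group d)" by (simp add: on_curve_def)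
next
  fix x y z assume "x \<in> carrier (ec_group d)" "y \<in> carrier (ec_group d)" "z \<in> carrier (ec_group d)"
  then show "x \<otimes>\<^bsub>ec_group d\<^esub> y \<otimes>\<^bsub>ec_group d\<^esub> z = x \<otimes>\<^bsub>ec_group d\<^esub> (y \<otimes>\<^bsub>ec_group d\<^esub> z)"
    using ec_assoc[OF d] by simp
next
  fix x y assume "x \<in> carrier (ec_group d)" "y \<in> carrier (ec_group d)"
  then show "x \<otimes>\<^bsub>ec_group d\<^esub> y = y \<otimes>\<^bsub>ec_group d\<^esub> x" using add_comm[OF d] by simp
next
  fix x assume "x \<in> carrier (ec_group d)"
  then show "\<one>\<^bsub>ec_group d\<^esub> \<otimes>\<^bsub>ec_group d\<^esub> x = x" by simp
next
  fix x assume "x \<in> carrier (ec_group d)"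
  then show "\<exists>y\<in>carrier (ec_group d). y \<otimes>\<^bsub>ec_group d\<^esub> x = \<one>\<^bsub>ec_group d\<^esub>"
    using neg_on[of d x] add_inv[of d x] add_comm[OF d, of x "ec_neg x"] by (intro bexI[of _ "ec_neg x"]) auto
qed

lemma ec_mul_on: assumes d: "d \<noteq> 0" and P: "on_curve d P" shows "on_curve d (ec_mul d n P)"
proof (induction n)
  case 0 then show ?case by (simp add: on_curve_def)
next
  case (Suc n) then show ?case using add_on[OF d P] by simp
qed

lemma ec_mul_pow: assumes d: "d \<noteq> 0" and P: "on_curve d P"
  shows "ec_mul d n P = P [^]\<^bsub>ec_group d\<^esub> n"
proof (induction n)
  case 0 then show ?case by simp
next
  case (Suc n)
  have "ec_mul d (Suc n) P = ec_add d P (ec_mul d n P)" by simp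
  also have "\<dots> = ec_add d (ec_mul d n P) P" using add_comm[OF d P ec_mul_on[OF d P]] .
  finally show ?case using Suc by simp
qed


definition vp :: "int \<Rightarrow> rat \<Rightarrow> int" where
  "vp p r = (case quotient_of r of (a, b) \<Rightarrow> int (multiplicity p a) - int (multiplicity p b))"

lemma vp_frac:
  assumes p: "prime p" and a: "a \<noteq> 0" and b: "b \<noteq> 0"
  shows "vp p (of_int a / of_int b) = int (multiplicity p a) - int (multiplicity p b)"
proof -
  obtain a' b' where q: "quotient_of (of_int a / of_int b) = (a', b')" by (cases "quotient_of (of_int a / of_int b)") auto
  have r: "(of_int a / of_int b :: rat) = of_int a' / of_int b'" using quotient_of_div[OF q] .
  have b': "b' > 0" using quotient_of_denom_pos[OF q] .
  have "(of_int a' :: rat) = of_int a / of_int b * of_int b'" using r b' by (simp add: field_simps)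
  then have "(of_int a' :: rat) * of_int b = of_int a * of_int b'" using b by (simp add: field_simps)
  then have e: "a' * b = a * b'" by (metis of_int_eq_iff of_int_mult)
  have a': "a' \<noteq> 0" using e a b' by auto
  have pe: "prime_elem p" using prime_imp_prime_elem[OF p] .
  have "multiplicity p (a' * b) = multiplicity p (a * b')" using e by simp
  moreover have "multiplicity p (a' * b) = multiplicity p a' + multiplicity p b"
    by (rule prime_elem_multiplicity_mult_distrib[OF pe a' b])
  moreover have "multiplicity p (a * b') = multiplicity p a + multiplicity p b'"
    using prime_elem_multiplicity_mult_distrib[OF pe a] b' by simp
  ultimately have "multiplicity p a' + multiplicity p b = multiplicity p a + multiplicity p b'" by simp
  then have "int (multiplicity p a') + int (multiplicity p b) = int (multiplicity p a) + int (multiplicity p b')"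
    by (metis of_nat_add)
  then have "int (multiplicity p a') - int (multiplicity p b') = int (multiplicity p a) - int (multiplicity p b)"
    by linarith
  then show ?thesis unfolding vp_def q by simp
qed

lemma rat_as_frac: fixes r :: rat obtains a b :: int where "b \<noteq> 0" "r = of_int a / of_int b" "r \<noteq> 0 \<Longrightarrow> a \<noteq> 0"
proof -
  obtain a b where q: "quotient_of r = (a, b)" by (cases "quotient_of r") auto
  have "r = of_int a / of_int b" using quotient_of_div[OF q] .
  moreover have "b > 0" using quotient_of_denom_pos[OF q] .
  ultimately show ?thesis by (intro that[of b a]) auto
qed

lemma vp_int: assumes "prime p" "a \<noteq> 0" shows "vp p (of_int a) = int (multiplicity p a)"
  using vp_frac[OF assms(1,2), of 1] by simp

lemma vp_mult:
  assumes p: "prime p" and r: "r \<noteq> 0" and s: "s \<noteq> 0"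
  shows "vp p (r*s) = vp p r + vp p s"
proof -
  obtain a b where ab: "b \<noteq> 0" "r = of_int a / of_int b" "a \<noteq> 0" using rat_as_frac[of r] r by metis
  obtain c e where ce: "e \<noteq> 0" "s = of_int c / of_int e" "c \<noteq> 0" using rat_as_frac[of s] s by metis
  have "r*s = of_int (a*c) / of_int (b*e)" using ab ce by simp
  then have "vp p (r*s) = int (multiplicity p (a*c)) - int (multiplicity p (b*e))"
    using vp_frac[OF p, of "a*c" "b*e"] ab ce by simp
  also have "\<dots> = (int (multiplicity p a) - int (multiplicity p b)) + (int (multiplicity p c) - int (multiplicity p e))"
    using prime_elem_multiplicity_mult_distrib[OF prime_imp_prime_elem[OF p], of a c]
      prime_elem_multiplicity_mult_distrib[OF prime_imp_prime_elem[OF p], of b e] ab ce by simp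
  finally show ?thesis using vp_frac[OF p] ab ce by simp
qed

lemma vp_one[simp]: "prime p \<Longrightarrow> vp p 1 = 0"
  using vp_int[of p 1] by simp

lemma vp_inverse:
  assumes p: "prime p" and r: "r \<noteq> 0" shows "vp p (inverse r) = - vp p r"
  using vp_mult[OF p r, of "inverse r"] r vp_one[OF p] by simp

lemma vp_divide:
  assumes p: "prime p" and r: "r \<noteq> 0" and s: "s \<noteq> 0" shows "vp p (r / s) = vp p r - vp p s"
  using vp_mult[OF p r, of "inverse s"] vp_inverse[OF p s] s by (simp add: divide_inverse)

lemma vp_power:
  assumes p: "prime p" and r: "r \<noteq> 0" shows "vp p (r ^ n) = int n * vp p r"
proof (induction n)
  case 0 then show ?case using p by simp
next
  case (Suc n) then show ?case using vp_mult[OF p r, of "r^n"] r by (simp add: algebra_simps)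
qed

lemma vp_uminus: assumes p: "prime p" shows "vp p (- r) = vp p r"
proof (cases "r = 0")
  case True then show ?thesis by simp
next
  case False
  have "vp p (-1) = 0" using vp_int[OF p, of "-1"] by simp
  then show ?thesis using vp_mult[OF p, of "-1" r] False by simp
qed

lemma vp_add:
  assumes p: "prime p" and r: "r \<noteq> 0" and s: "s \<noteq> 0" and rs: "r + s \<noteq> 0"
  shows "vp p (r + s) \<ge> min (vp p r) (vp p s)"
proof -
  obtain a b where ab: "b \<noteq> 0" "r = of_int a / of_int b" "a \<noteq> 0" using rat_as_frac[of r] r by metis
  obtain c e where ce: "e \<noteq> 0" "s = of_int c / of_int e" "c \<noteq> 0" using rat_as_frac[of s] s by metis
  have sum: "r + s = of_int (a*e + c*b) / of_int (b*e)" using ab ce by (simp add: field_simps)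
  have n0: "a*e + c*b \<noteq> 0"
  proof
    assume "a*e + c*b = 0" then have "r + s = 0" using sum by simp
    then show False using rs by simp
  qed
  define k where "k = min (multiplicity p a + multiplicity p e) (multiplicity p c + multiplicity p b)"
  have m1: "multiplicity p (a*e) = multiplicity p a + multiplicity p e"
    using prime_elem_multiplicity_mult_distrib[OF prime_imp_prime_elem[OF p], of a e] ab ce by simp
  have m2: "multiplicity p (c*b) = multiplicity p c + multiplicity p b"
    using prime_elem_multiplicity_mult_distrib[OF prime_imp_prime_elem[OF p], of c b] ab ce by simp
  have "p ^ k dvd a*e" using multiplicity_dvd'[of k p "a*e"] m1 k_def by simp
  moreover have "p ^ k dvd c*b" using multiplicity_dvd'[of k p "c*b"] m2 k_def by simp
  ultimately have "p ^ k dvd a*e + c*b" by simp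
  moreover have "\<not> is_unit p" using p not_prime_unit by blast
  ultimately have mk: "multiplicity p (a*e + c*b) \<ge> k" using multiplicity_geI[OF n0] by blast
  have mbe: "multiplicity p (b*e) = multiplicity p b + multiplicity p e"
    using prime_elem_multiplicity_mult_distrib[OF prime_imp_prime_elem[OF p], of b e] ab ce by simp
  have "vp p (r + s) = int (multiplicity p (a*e + c*b)) - int (multiplicity p (b*e))"
    unfolding sum by (rule vp_frac[OF p n0]) (use ab ce in simp)
  moreover have "vp p r = int (multiplicity p a) - int (multiplicity p b)" using vp_frac[OF p] ab by simp
  moreover have "vp p s = int (multiplicity p c) - int (multiplicity p e)" using vp_frac[OF p] ce by simp
  moreover have "int (multiplicity p (a*e + c*b)) \<ge> int (multiplicity p a) + int (multiplicity p e) \<or>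
     int (multiplicity p (a*e + c*b)) \<ge> int (multiplicity p c) + int (multiplicity p b)"
    using mk unfolding k_def by (cases "multiplicity p a + multiplicity p e \<le> multiplicity p c + multiplicity p b") (auto simp: min_def)
  moreover have gen: "\<And>V R S M B E A C :: int. V = M - (B + E) \<Longrightarrow> R = A - B \<Longrightarrow> S = C - E \<Longrightarrow>
     (A + E \<le> M \<or> C + B \<le> M) \<Longrightarrow> min R S \<le> V"
  proof -
    fix V R S M B E A C :: int
    assume "V = M - (B + E)" "R = A - B" "S = C - E" "A + E \<le> M \<or> C + B \<le> M"
    then show "min R S \<le> V" by (cases "R \<le> S") (auto simp: min_def)
  qed
  ultimately show ?thesis using mbe
    gen[of "vp p (r+s)" "vp p r" "vp p s" "int (multiplicity p (a*e+c*b))" "int (multiplicity p b)" "int (multiplicity p e)"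
      "int (multiplicity p a)" "int (multiplicity p c)"] by simp
qed

definition vge :: "int \<Rightarrow> int \<Rightarrow> rat \<Rightarrow> bool" where
  "vge p k r \<longleftrightarrow> r = 0 \<or> k \<le> vp p r"

lemma vge_0[simp]: "vge p k 0" by (simp add: vge_def)

lemma vge_add: assumes p: "prime p" "vge p k a" "vge p k b" shows "vge p k (a + b)"
proof (cases "a = 0 \<or> b = 0 \<or> a + b = 0")
  case True then show ?thesis using assms by auto
next
  case False
  then have "vp p (a + b) \<ge> min (vp p a) (vp p b)" using vp_add[OF p(1), of a b] by simp
  moreover have "k \<le> vp p a" "k \<le> vp p b" using assms False unfolding vge_def by auto
  ultimately have "k \<le> vp p (a + b)" by linarith
  then show ?thesis unfolding vge_def by simp
qed

lemma vge_uminus: assumes p: "prime p" "vge p k a" shows "vge p k (- a)"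
  using assms vp_uminus[OF p(1)] unfolding vge_def by auto

lemma vge_diff: assumes p: "prime p" "vge p k a" "vge p k b" shows "vge p k (a - b)"
  using vge_add[OF p(1,2) vge_uminus[OF p(1,3)]] by simp

lemma vge_mult: assumes p: "prime p" "vge p j a" "vge p k b" shows "vge p (j + k) (a * b)"
proof (cases "a = 0 \<or> b = 0")
  case True then show ?thesis by auto
next
  case False
  then have "vp p (a * b) = vp p a + vp p b" using vp_mult[OF p(1), of a b] by simp
  moreover have "j \<le> vp p a" "k \<le> vp p b" using assms False unfolding vge_def by auto
  ultimately show ?thesis unfolding vge_def by simp
qed

lemma vge_mono: "vge p k a \<Longrightarrow> j \<le> k \<Longrightarrow> vge p j a"
  unfolding vge_def by auto

lemma vge_int: assumes p: "prime p" shows "vge p 0 (of_int z)"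
proof (cases "z = 0")
  case True then show ?thesis by simp
next
  case False then show ?thesis using vp_int[OF p False] unfolding vge_def by simp
qed

lemma vge_nat: assumes p: "prime p" shows "vge p 0 (of_nat z)"
  using vge_int[OF p, of "int z"] by simp

lemma vge_numeral: assumes p: "prime p" shows "vge p 0 (numeral z)"
  using vge_int[OF p, of "numeral z"] by simp

lemma vge_mult0: assumes p: "prime p" "vge p 0 a" "vge p k b" shows "vge p k (a * b)"
  using vge_mult[OF assms] by simp

lemma vge_strict_add:
  assumes p: "prime p" and r: "r \<noteq> 0" and s: "vge p (vp p r + 1) s"
  shows "r + s \<noteq> 0 \<and> vp p (r + s) = vp p r"
proof (cases "s = 0")
  case True then show ?thesis using r by simp
next
  case False
  have vs: "vp p s > vp p r" using s False unfolding vge_def by simp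
  have rs: "r + s \<noteq> 0"
  proof
    assume "r + s = 0" then have "s = - r" by simp
    then have "vp p s = vp p r" using vp_uminus[OF p] by simp
    then show False using vs by simp
  qed
  have ge: "vp p (r+s) \<ge> vp p r" using vp_add[OF p r False rs] vs by simp
  have "vp p r \<ge> min (vp p (r+s)) (vp p (-s))"
    using vp_add[OF p rs, of "-s"] False r by simp
  then have "vp p (r+s) \<le> vp p r" using vs vp_uminus[OF p, of s] by linarith
  then show ?thesis using ge rs by simp
qed

lemma vge_unit:
  assumes p: "prime p" and u: "vge p 1 u" shows "1 + u \<noteq> 0 \<and> vp p (1 + u) = 0"
  using vge_strict_add[OF p, of 1 u] u p by simp

lemma vge_div_unit:
  assumes p: "prime p" and a: "vge p k a" and b: "b \<noteq> 0" "vp p b = 0" shows "vge p k (a / b)"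
proof (cases "a = 0")
  case True then show ?thesis by simp
next
  case False
  then have "vp p (a / b) = vp p a" using vp_divide[OF p False b(1)] b(2) by simp
  then show ?thesis using a False b unfolding vge_def by simp
qed

lemma vp_ge_vge: "r \<noteq> 0 \<Longrightarrow> vge p k r \<longleftrightarrow> k \<le> vp p r" unfolding vge_def by simp

lemma prime_vp_self: assumes p: "prime p" shows "vp p (of_int p) = 1"
proof -
  have "p \<noteq> 0" using p by auto
  then show ?thesis using vp_int[OF p, of p] multiplicity_prime[OF prime_imp_prime_elem[OF p]] by simp
qed

lemma vp_int_le1:
  assumes p: "prime p" and l: "prime (l::int)" shows "vp p (of_int l) \<le> 1"
proof (cases "p = l")
  case True then show ?thesis using prime_vp_self[OF p] by simp
next
  case False
  have "multiplicity p l = 0" using prime_multiplicity_other[OF p l False] .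
  then show ?thesis using vp_int[OF p, of l] l by auto
qed

lemma int_of_vge:
  assumes "\<And>p. prime p \<Longrightarrow> vge p 0 r" shows "r \<in> \<int>"
proof -
  obtain a b where q: "quotient_of r = (a, b)" by (cases "quotient_of r") auto
  have r: "r = of_int a / of_int b" using quotient_of_div[OF q] .
  have b: "b > 0" using quotient_of_denom_pos[OF q] .
  have cop: "coprime a b" using quotient_of_coprime[OF q] .
  show ?thesis
  proof (cases "b = 1")
    case True then show ?thesis using r by simp
  next
    case False
    then have "b \<noteq> 1" "b \<noteq> 0" using b by auto
    then have "\<not> is_unit b" using b by auto
    then obtain p where p: "prime p" "p dvd b" using prime_factor_int[of b] b by auto
    have pa: "\<not> p dvd a" using p cop by (meson coprime_common_divisor not_prime_unit)
    have a0: "a \<noteq> 0" using pa by auto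
    have "multiplicity p a = 0" using pa by (rule not_dvd_imp_multiplicity_0)
    moreover have "multiplicity p b \<ge> 1" using p multiplicity_geI[of b p 1] \<open>b \<noteq> 0\<close> not_prime_unit by auto
    ultimately have "vp p r < 0" using vp_frac[OF p(1) a0, of b] b r by simp
    moreover have "r \<noteq> 0" using r a0 b by simp
    ultimately show ?thesis using assms[OF p(1)] unfolding vge_def by simp
  qed
qed

lemma vge_of_Ints: assumes p: "prime p" and r: "r \<in> \<int>" shows "vge p 0 r"
  using r vge_int[OF p] by (auto elim: Ints_cases)


lemma vge_mult_le: "prime p \<Longrightarrow> vge p j a \<Longrightarrow> vge p k b \<Longrightarrow> m \<le> j + k \<Longrightarrow> vge p m (a*b)"
  using vge_mult vge_mono by blast

lemma vge_of_vp: "r \<noteq> 0 \<Longrightarrow> k \<le> vp p r \<Longrightarrow> vge p k r" by (simp add: vge_def)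

lemma g_val:
  fixes A B C X :: rat
  assumes p: "prime p" and A: "vge p 0 A" and B: "vge p 0 B" and C: "vge p 0 C"
    and X: "X \<noteq> 0" "vp p X < 0"
  shows "X^3 + A*X^2 + B*X + C \<noteq> 0 \<and> vp p (X^3 + A*X^2 + B*X + C) = 3 * vp p X"
proof -
  define w where "w = 1 / X"
  have w0: "w \<noteq> 0" using X by (simp add: w_def)
  have vw: "vp p w = - vp p X" using vp_divide[OF p, of 1 X] X p by (simp add: w_def)
  have w1: "vge p 1 w" using vw X w0 by (simp add: vge_def)
  define u where "u = A*w + B*(w*w) + C*(w*w*w)"
  have u1: "vge p 1 u" unfolding u_def
    by (intro vge_add[OF p] vge_mult_le[OF p A w1] vge_mult_le[OF p B vge_mult[OF p w1 w1]]
         vge_mult_le[OF p C vge_mult[OF p vge_mult[OF p w1 w1] w1]]) auto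
  have un: "1 + u \<noteq> 0 \<and> vp p (1 + u) = 0" using vge_unit[OF p u1] .
  have g: "X^3 + A*X^2 + B*X + C = X^3 * (1 + u)" using X unfolding u_def w_def
    by (simp add: field_simps power2_eq_square power3_eq_cube)
  have "vp p (X^3 * (1 + u)) = vp p (X^3) + 0" using vp_mult[OF p, of "X^3" "1+u"] X un by simp
  also have "\<dots> = 3 * vp p X" using vp_power[OF p X(1), of 3] by simp
  finally show ?thesis using g X un by simp
qed

lemma wval:
  fixes A B C X Y :: rat
  assumes p: "prime p" and A: "vge p 0 A" and B: "vge p 0 B" and C: "vge p 0 C"
    and c: "Y^2 = X^3 + A*X^2 + B*X + C" and X: "X \<noteq> 0" "vp p X < 0"
  shows "Y \<noteq> 0 \<and> (\<exists>k. k \<ge> 1 \<and> vp p X = -2*k \<and> vp p Y = -3*k)"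
proof -
  have G: "X^3 + A*X^2 + B*X + C \<noteq> 0 \<and> vp p (X^3 + A*X^2 + B*X + C) = 3 * vp p X"
    using g_val[OF p A B C X] .
  have Y: "Y \<noteq> 0" using G c by auto
  have "vp p (Y^2) = 2 * vp p Y" using vp_power[OF p Y, of 2] by simp
  then have e: "2 * vp p Y = 3 * vp p X" using G c by simp
  define k where "k = - (vp p X) div 2"
  have "even (vp p X)"
  proof -
    have "even (3 * vp p X)" using e by (metis dvd_triv_left)
    then show ?thesis by simp
  qed
  then have kx: "vp p X = -2*k" unfolding k_def by (metis add.inverse_inverse dvd_minus_iff dvd_mult_div_cancel mult_minus_left)
  have ky: "vp p Y = -3*k" using e kx by linarith
  have "k \<ge> 1" using kx X(2) by linarith
  then show ?thesis using Y kx ky by blast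
qed

lemma ts_val:
  fixes A B C X Y :: rat
  assumes p: "prime p" and A: "vge p 0 A" and B: "vge p 0 B" and C: "vge p 0 C"
    and c: "Y^2 = X^3 + A*X^2 + B*X + C" and X: "X \<noteq> 0" "vp p X \<le> -2*n"
    and n: "n \<ge> 1"
  shows "Y \<noteq> 0 \<and> vge p n (X/Y) \<and> vge p (3*n) (1/Y) \<and> X/Y \<noteq> 0"
proof -
  have "vp p X < 0" using X n by linarith
  then obtain k where Y: "Y \<noteq> 0" and k: "k \<ge> 1" "vp p X = -2*k" "vp p Y = -3*k"
    using wval[OF p A B C c X(1)] by blast
  have kn: "k \<ge> n" using k X by linarith
  have "vp p (X/Y) = k" using vp_divide[OF p X(1) Y] k by simp
  then have t: "vge p n (X/Y)" using kn X Y by (simp add: vge_def)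
  have "vp p (1/Y) = 3*k" using vp_divide[OF p, of 1 Y] Y k p by simp
  then have s: "vge p (3*n) (1/Y)" using kn Y by (simp add: vge_def)
  show ?thesis using Y t s X by simp
qed

lemma ts_curve:
  fixes A B C X Y :: rat
  assumes Y: "Y \<noteq> 0" and c: "Y^2 = X^3 + A*X^2 + B*X + C"
  shows "1/Y = (X/Y)^3 + A*(X/Y)^2*(1/Y) + B*(X/Y)*(1/Y)^2 + C*(1/Y)^3"
proof -
  have "(X/Y)^3 + A*(X/Y)^2*(1/Y) + B*(X/Y)*(1/Y)^2 + C*(1/Y)^3 = (X^3 + A*X^2 + B*X + C)/Y^3"
    using Y by (simp add: field_simps power2_eq_square power3_eq_cube)
  also have "\<dots> = Y^2/Y^3" using c by simp
  also have "\<dots> = 1/Y" using Y by (simp add: power2_eq_square power3_eq_cube)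
  finally show ?thesis by simp
qed

lemma chord_iden:
  fixes A B C t1 s1 t2 s2 :: rat
  assumes c1: "s1 = t1^3 + A*t1^2*s1 + B*t1*s1^2 + C*s1^3"
    and c2: "s2 = t2^3 + A*t2^2*s2 + B*t2*s2^2 + C*s2^3"
  shows "(s2 - s1) * (1 - A*t1^2 - B*t1*(s1+s2) - C*(s1^2 + s1*s2 + s2^2))
       = (t2 - t1) * (t1^2 + t1*t2 + t2^2 + A*(t1+t2)*s2 + B*s2^2)"
proof -
  have "(s2 - s1) * (1 - A*t1^2 - B*t1*(s1+s2) - C*(s1^2 + s1*s2 + s2^2))
      - (t2 - t1) * (t1^2 + t1*t2 + t2^2 + A*(t1+t2)*s2 + B*s2^2)
      = (s2 - (t2^3 + A*t2^2*s2 + B*t2*s2^2 + C*s2^3)) - (s1 - (t1^3 + A*t1^2*s1 + B*t1*s1^2 + C*s1^3))"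
    by (simp add: algebra_simps power2_eq_square power3_eq_cube)
  also have "\<dots> = 0" using c1 c2 by simp
  finally show ?thesis by simp
qed

lemma tangent_iden:
  fixes A B C X Y lam mu :: rat
  assumes Y: "Y \<noteq> 0" and c: "Y^2 = X^3 + A*X^2 + B*X + C"
    and tg: "2*lam*Y = 3*X^2 + 2*A*X + B" and l: "Y = lam*X + mu"
  shows "lam * (1 - A*(X/Y)^2 - 2*B*(X/Y)*(1/Y) - 3*C*(1/Y)^2)
       + mu * (3*(X/Y)^2 + 2*A*(X/Y)*(1/Y) + B*(1/Y)^2) = 0"
proof -
  let ?E = "lam * (1 - A*(X/Y)^2 - 2*B*(X/Y)*(1/Y) - 3*C*(1/Y)^2)
       + mu * (3*(X/Y)^2 + 2*A*(X/Y)*(1/Y) + B*(1/Y)^2)"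
  have m: "mu = Y - lam*X" using l by simp
  have s1: "Y^3 * ?E = Y * (lam * (Y^2 - A*X^2 - 2*B*X - 3*C - X*(3*X^2 + 2*A*X + B)) + Y*(3*X^2 + 2*A*X + B))"
    using Y unfolding m by (simp add: field_simps power2_eq_square power3_eq_cube)
  have s2: "Y^2 - A*X^2 - 2*B*X - 3*C - X*(3*X^2 + 2*A*X + B) = -2*Y^2"
    using c by (simp add: algebra_simps power2_eq_square power3_eq_cube)
  have s3: "Y*(3*X^2 + 2*A*X + B) = 2*lam*Y^2" using tg by (simp add: power2_eq_square algebra_simps)
  have "Y^3 * ?E = 0" unfolding s1 s2 s3 by simp
  then show ?thesis using Y by simp
qed

lemma KLW:
  fixes p n :: int and A B C X1 Y1 X2 Y2 X3 lam mu :: rat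
  assumes p: "prime p" and n: "n \<ge> 1"
    and A: "vge p 0 A" and B: "vge p 0 B" and C: "vge p 0 C"
    and c1: "Y1^2 = X1^3 + A*X1^2 + B*X1 + C" and c2: "Y2^2 = X2^3 + A*X2^2 + B*X2 + C"
    and c3: "(lam*X3+mu)^2 = X3^3 + A*X3^2 + B*X3 + C"
    and l1: "Y1 = lam*X1 + mu" and l2: "Y2 = lam*X2 + mu"
    and s1: "X1+X2+X3 = lam^2 - A" and s2: "X1*X2+X1*X3+X2*X3 = B - 2*lam*mu" and s3: "X1*X2*X3 = mu^2 - C"
    and X1: "X1 \<noteq> 0" "vp p X1 \<le> -2*n" and X2: "X2 \<noteq> 0" "vp p X2 \<le> -2*n"
    and cs: "X1 \<noteq> X2 \<or> (X1 = X2 \<and> Y1 = Y2 \<and> 2*lam*Y1 = 3*X1^2 + 2*A*X1 + B)"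
  shows "lam*X3 + mu \<noteq> 0 \<and> X3 \<noteq> 0 \<and> vp p X3 \<le> -2*n \<and>
         vge p (3*n) (X3/(-(lam*X3+mu)) - X1/Y1 - X2/Y2)"
proof -
  have T1: "Y1 \<noteq> 0 \<and> vge p n (X1/Y1) \<and> vge p (3*n) (1/Y1) \<and> X1/Y1 \<noteq> 0" using ts_val[OF p A B C c1 X1 n] .
  have T2: "Y2 \<noteq> 0 \<and> vge p n (X2/Y2) \<and> vge p (3*n) (1/Y2) \<and> X2/Y2 \<noteq> 0" using ts_val[OF p A B C c2 X2 n] .
  define t1 where "t1 = X1/Y1"
  define t2 where "t2 = X2/Y2"
  define r1 where "r1 = 1/Y1"
  define r2 where "r2 = 1/Y2"
  have Y1: "Y1 \<noteq> 0" and Y2: "Y2 \<noteq> 0" using T1 T2 by auto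
  have vt1: "vge p n t1" and vt2: "vge p n t2" and vr1: "vge p (3*n) r1" and vr2: "vge p (3*n) r2"
    using T1 T2 unfolding t1_def t2_def r1_def r2_def by auto
  have cr1: "r1 = t1^3 + A*t1^2*r1 + B*t1*r1^2 + C*r1^3" unfolding t1_def r1_def using ts_curve[OF Y1 c1] .
  have cr2: "r2 = t2^3 + A*t2^2*r2 + B*t2*r2^2 + C*r2^3" unfolding t2_def r2_def using ts_curve[OF Y2 c2] .
  have "lam*t1 + mu*r1 = (lam*X1 + mu)/Y1" unfolding t1_def r1_def by (simp add: add_divide_distrib)
  then have lr1: "1 = lam*t1 + mu*r1" using Y1 l1 by simp
  have "lam*t2 + mu*r2 = (lam*X2 + mu)/Y2" unfolding t2_def r2_def by (simp add: add_divide_distrib)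
  then have lr2: "1 = lam*t2 + mu*r2" using Y2 l2 by simp
  have nn: "n \<ge> 0" using n by simp
  have v2t: "vge p (2*n) (a*b)" if "vge p n a" "vge p n b" for a b using vge_mult_le[OF p that] by simp
  have vA2: "vge p (2*n) (K*a*b)" if "vge p 0 K" "vge p n a" "vge p n b" for K a b
    using vge_mult_le[OF p vge_mult_le[OF p that(1) that(2), of n] that(3), of "2*n"] by simp
  have vAts: "vge p (2*n) (K*a*b)" if "vge p 0 K" "vge p n a" "vge p (3*n) b" for K a b
    using vge_mult_le[OF p vge_mult_le[OF p that(1) that(2), of n] that(3), of "2*n"] nn by simp
  have vAss: "vge p (2*n) (K*a*b)" if "vge p 0 K" "vge p (3*n) a" "vge p (3*n) b" for K a b
    using vge_mult_le[OF p vge_mult_le[OF p that(1) that(2), of "3*n"] that(3), of "2*n"] nn by simp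
  have one: "vge p 1 a" if "vge p (2*n) a" for a using vge_mono[OF that] n by simp
  have unitI: "u \<noteq> 0 \<and> vp p u = 0" if "vge p (2*n) (u - 1)" for u
    using vge_unit[OF p one[OF that]] by simp
  obtain al where mu0: "mu \<noteq> 0" and al: "al = - lam/mu" and val: "vge p (2*n) al"
  proof (cases "X1 \<noteq> X2")
    case True
    define Dn where "Dn = 1 - A*t1^2 - B*t1*(r1+r2) - C*(r1^2 + r1*r2 + r2^2)"
    define Nm where "Nm = t1^2 + t1*t2 + t2^2 + A*(t1+t2)*r2 + B*r2^2"
    have iden: "(r2 - r1) * Dn = (t2 - t1) * Nm" unfolding Dn_def Nm_def by (rule chord_iden[OF cr1 cr2])
    have "vge p (2*n) (Dn - 1)" unfolding Dn_def
    proof -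
      have "Dn - 1 = - (A*t1*t1 + B*t1*(r1+r2) + C*r1*r1 + C*r1*r2 + C*r2*r2)" unfolding Dn_def
        by (simp add: algebra_simps power2_eq_square)
      moreover have "vge p (2*n) (A*t1*t1 + B*t1*(r1+r2) + C*r1*r1 + C*r1*r2 + C*r2*r2)"
        by (intro vge_add[OF p] vA2[OF A vt1 vt1] vAts[OF B vt1 vge_add[OF p vr1 vr2]]
           vAss[OF C vr1 vr1] vAss[OF C vr1 vr2] vAss[OF C vr2 vr2])
      ultimately show "vge p (2 * n) (1 - A * t1\<^sup>2 - B * t1 * (r1 + r2) - C * (r1\<^sup>2 + r1 * r2 + r2\<^sup>2) - 1)"
        unfolding Dn_def using vge_uminus[OF p] by metis
    qed
    then have Dn: "Dn \<noteq> 0" "vp p Dn = 0" using unitI by auto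
    have vNm: "vge p (2*n) Nm"
    proof -
      have "Nm = t1*t1 + t1*t2 + t2*t2 + A*t1*r2 + A*t2*r2 + B*r2*r2" unfolding Nm_def
        by (simp add: algebra_simps power2_eq_square)
      moreover have "vge p (2*n) (t1*t1 + t1*t2 + t2*t2 + A*t1*r2 + A*t2*r2 + B*r2*r2)"
        by (intro vge_add[OF p] v2t vt1 vt2 vAts[OF A vt1 vr2] vAts[OF A vt2 vr2] vAss[OF B vr2 vr2])
      ultimately show ?thesis by simp
    qed
    have tt: "t1 \<noteq> t2"
    proof
      assume e: "t1 = t2"
      then have "(r2 - r1) * Dn = 0" using iden by simp
      then have "r1 = r2" using Dn by simp
      then have "Y1 = Y2" unfolding r1_def r2_def by simp
      then have "X1 = X2" using e Y1 unfolding t1_def t2_def by simp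
      then show False using True by simp
    qed
    have ll: "lam*(t2 - t1) + mu*(r2 - r1) = 0" using lr1 lr2 by (simp add: algebra_simps)
    have mu0: "mu \<noteq> 0"
    proof
      assume "mu = 0"
      then have "lam = 0" using ll tt by simp
      then show False using \<open>mu = 0\<close> l1 Y1 by simp
    qed
    have rr: "r2 - r1 = (t2 - t1) * Nm / Dn" using iden Dn(1) by (simp add: eq_divide_eq)
    have "(t2 - t1) * lam = (t2 - t1) * (- mu * (Nm / Dn))"
    proof -
      have "(t2 - t1) * lam = - (mu * (r2 - r1))" using ll by (simp add: algebra_simps)
      also have "\<dots> = (t2 - t1) * (- mu * (Nm / Dn))" unfolding rr by (simp add: algebra_simps)
      finally show ?thesis .
    qed
    then have "lam = - mu * (Nm / Dn)" using tt by (metis mult_left_cancel right_minus_eq)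
    then have "- lam/mu = Nm / Dn" using mu0 by simp
    moreover have "vge p (2*n) (Nm/Dn)" using vge_div_unit[OF p vNm Dn] .
    ultimately show ?thesis using that[of "Nm/Dn"] mu0 by simp
  next
    case False
    then have e: "X1 = X2" "Y1 = Y2" and tg: "2*lam*Y1 = 3*X1^2 + 2*A*X1 + B" using cs by auto
    define Dn where "Dn = 1 - A*(X1/Y1)^2 - 2*B*(X1/Y1)*(1/Y1) - 3*C*(1/Y1)^2"
    define Nm where "Nm = 3*(X1/Y1)^2 + 2*A*(X1/Y1)*(1/Y1) + B*(1/Y1)^2"
    have iden: "lam*Dn + mu*Nm = 0" unfolding Dn_def Nm_def by (rule tangent_iden[OF Y1 c1 tg l1])
    have "vge p (2*n) (Dn - 1)"
    proof -
      have "Dn - 1 = - (A*t1*t1 + 2*B*t1*r1 + 3*C*r1*r1)" unfolding Dn_def t1_def r1_def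
        by (simp add: algebra_simps power2_eq_square)
      moreover have "vge p (2*n) (A*t1*t1 + 2*B*t1*r1 + 3*C*r1*r1)"
        by (intro vge_add[OF p] vA2[OF A vt1 vt1] vAts[OF vge_mult0[OF p vge_numeral[OF p] B] vt1 vr1]
           vAss[OF vge_mult0[OF p vge_numeral[OF p] C] vr1 vr1])
      ultimately show ?thesis using vge_uminus[OF p] by metis
    qed
    then have Dn: "Dn \<noteq> 0" "vp p Dn = 0" using unitI by auto
    have vNm: "vge p (2*n) Nm"
    proof -
      have "Nm = 3*t1*t1 + 2*A*t1*r1 + B*r1*r1" unfolding Nm_def t1_def r1_def
        by (simp add: algebra_simps power2_eq_square)
      moreover have "vge p (2*n) (3*t1*t1 + 2*A*t1*r1 + B*r1*r1)"
        by (intro vge_add[OF p] vA2[OF vge_numeral[OF p] vt1 vt1] vAts[OF vge_mult0[OF p vge_numeral[OF p] A] vt1 vr1]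
           vAss[OF B vr1 vr1])
      ultimately show ?thesis by simp
    qed
    have mu0: "mu \<noteq> 0"
    proof
      assume "mu = 0"
      then have "lam = 0" using iden Dn by simp
      then show False using \<open>mu = 0\<close> l1 Y1 by simp
    qed
    have "lam * Dn = - (mu * Nm)" using iden by (simp add: algebra_simps add_eq_0_iff)
    then have "lam = - (mu * Nm) / Dn" using Dn(1) by (metis nonzero_mult_div_cancel_right)
    then have "- lam/mu = Nm/Dn" using mu0 by simp
    moreover have "vge p (2*n) (Nm/Dn)" using vge_div_unit[OF p vNm Dn] .
    ultimately show ?thesis using that[of "Nm/Dn"] mu0 by simp
  qed
  define be where "be = 1/mu"
  have alm: "al*mu = -lam" using al mu0 by simp
  have "mu*(r1 - al*t1) = mu*r1 - (al*mu)*t1" by (simp add: algebra_simps)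
  also have "\<dots> = 1" using alm lr1 by simp
  finally have "mu*(r1 - al*t1) = 1" .
  then have "r1 - al*t1 = 1/mu" using mu0 by (simp add: nonzero_eq_divide_eq mult.commute)
  then have be: "be = r1 - al*t1" unfolding be_def by simp
  have vbe: "vge p (3*n) be" unfolding be
    using vge_diff[OF p vr1 vge_mult_le[OF p val vt1]] by simp
  define Z3 where "Z3 = lam*X3 + mu"
  have al0: "al \<noteq> 0 \<or> lam = 0" using al mu0 by simp
  have Z3: "Z3 \<noteq> 0"
  proof
    assume z: "Z3 = 0"
    have lam0: "lam \<noteq> 0" using z mu0 unfolding Z3_def by auto
    have "lam*X3 = -mu" using z unfolding Z3_def by (simp add: add_eq_0_iff)
    then have "X3 = (-mu)/lam" using lam0 by (metis nonzero_mult_div_cancel_left)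
    then have X3e: "X3 = 1/al" using al by simp
    have aln: "al \<noteq> 0" using al lam0 mu0 by simp
    have X30: "X3 \<noteq> 0" using X3e aln by simp
    have "vp p al \<ge> 2*n" using val aln by (simp add: vge_def)
    then have "vp p X3 < 0" using X3e vp_divide[OF p, of 1 al] aln p n by simp
    then have "X3^3 + A*X3^2 + B*X3 + C \<noteq> 0" using g_val[OF p A B C X30] by simp
    then show False using c3 z unfolding Z3_def by simp
  qed
  define Den where "Den = mu^3 - A*lam*mu^2 + B*lam^2*mu - C*lam^3"
  define Num where "Num = A*mu^2 - 2*B*lam*mu + 3*C*lam^2"
  have D1: "Y1*Y2*Z3 = Den"
  proof -
    have "Y1*Y2*Z3 = lam^3*(X1*X2*X3) + lam^2*mu*(X1*X2+X1*X3+X2*X3) + lam*mu^2*(X1+X2+X3) + mu^3"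
      unfolding l1 l2 Z3_def by (simp add: algebra_simps power2_eq_square power3_eq_cube)
    also have "\<dots> = Den" unfolding s1 s2 s3 Den_def by (simp add: algebra_simps power2_eq_square power3_eq_cube)
    finally show ?thesis .
  qed
  have N1: "X1*Y2*Z3 + X2*Y1*Z3 + X3*Y1*Y2 = - Num"
  proof -
    have "X1*Y2*Z3 + X2*Y1*Z3 + X3*Y1*Y2 = 3*lam^2*(X1*X2*X3) + 2*lam*mu*(X1*X2+X1*X3+X2*X3) + mu^2*(X1+X2+X3)"
      unfolding l1 l2 Z3_def by (simp add: algebra_simps power2_eq_square power3_eq_cube)
    also have "\<dots> = - Num" unfolding s1 s2 s3 Num_def by (simp add: algebra_simps power2_eq_square power3_eq_cube)
    finally show ?thesis .
  qed
  define T where "T = X1/Y1 + X2/Y2 + X3/Z3"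
  have T1: "T = - Num / Den"
  proof -
    have "T = (X1*Y2*Z3 + X2*Y1*Z3 + X3*Y1*Y2)/(Y1*Y2*Z3)" unfolding T_def using Y1 Y2 Z3
      by (simp add: field_simps)
    then show ?thesis unfolding D1 N1 by simp
  qed
  define K1 where "K1 = A + 2*B*al + 3*C*al^2"
  define K2 where "K2 = 1 + A*al + B*al^2 + C*al^3"
  have lam_e: "lam = - al*mu" using al mu0 by simp
  have DenK: "Den = mu^3 * K2" unfolding Den_def K2_def lam_e by (simp add: algebra_simps power2_eq_square power3_eq_cube)
  have NumK: "Num = mu^3 * (be * K1)" unfolding Num_def K1_def lam_e be_def using mu0
    by (simp add: field_simps power2_eq_square power3_eq_cube)
  have vK2: "vge p (2*n) (K2 - 1)"
  proof -
    have "K2 - 1 = A*al + B*al*al + C*al*al*al" unfolding K2_def by (simp add: algebra_simps power2_eq_square power3_eq_cube)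
    moreover have "vge p (2*n) (A*al + B*al*al + C*al*al*al)"
      by (intro vge_add[OF p] vge_mult_le[OF p A val] vge_mult_le[OF p vge_mult_le[OF p B val, of "2*n"] val]
        vge_mult_le[OF p vge_mult_le[OF p vge_mult_le[OF p C val, of "2*n"] val, of "2*n"] val]) (use n in auto)
    ultimately show ?thesis by simp
  qed
  then have K2: "K2 \<noteq> 0" "vp p K2 = 0" using unitI by auto
  have K1e: "K1 = A + (2*B)*al + (3*C)*(al*al)" unfolding K1_def by (simp add: algebra_simps power2_eq_square)
  have vK1: "vge p 0 K1" unfolding K1e
    by (intro vge_add[OF p] A vge_mult_le[OF p vge_mult0[OF p vge_numeral[OF p] B] val]
        vge_mult_le[OF p vge_mult0[OF p vge_numeral[OF p] C] vge_mult[OF p val val]]) (use n in auto)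
  have TK: "T = - (be * K1) / K2" unfolding T1 DenK NumK using mu0 K2 by simp
  have vT: "vge p (3*n) T" unfolding TK
    using vge_div_unit[OF p vge_uminus[OF p vge_mult_le[OF p vbe vK1]] K2] by simp
  have goal4: "vge p (3*n) (X3/(-(lam*X3+mu)) - X1/Y1 - X2/Y2)"
  proof -
    have "X3/(-(lam*X3+mu)) = - (X3/Z3)" unfolding Z3_def by (rule divide_minus_right)
    then have "X3/(-(lam*X3+mu)) - X1/Y1 - X2/Y2 = - T" unfolding T_def by simp
    then show ?thesis using vge_uminus[OF p vT] by simp
  qed
  define t3 where "t3 = X3/Z3"
  define r3 where "r3 = 1/Z3"
  have t3e: "t3 = T - t1 - t2" unfolding t3_def T_def t1_def t2_def by simp
  have vt3: "vge p n t3" unfolding t3e using vge_diff[OF p vge_diff[OF p vge_mono[OF vT] vt1] vt2] n by simp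
  have "lam*t3 + mu*r3 = (lam*X3 + mu)/Z3" unfolding t3_def r3_def by (simp add: add_divide_distrib)
  then have lr3: "lam*t3 + mu*r3 = 1" using Z3 unfolding Z3_def by simp
  have r3e: "r3 = al*t3 + be"
  proof -
    have "mu*(al*t3 + be) = (al*mu)*t3 + 1" using mu0 unfolding be_def by (simp add: algebra_simps)
    also have "\<dots> = mu*r3" using alm lr3 by (simp add: algebra_simps)
    finally show ?thesis using mu0 by simp
  qed
  have vr3: "vge p (3*n) r3" unfolding r3e using vge_add[OF p vge_mult_le[OF p val vt3] vbe] by simp
  have cr3: "r3 = t3^3 + A*t3^2*r3 + B*t3*r3^2 + C*r3^3" unfolding t3_def r3_def
    using ts_curve[OF Z3, of X3 A B C] c3 unfolding Z3_def by simp
  define U where "U = 1 - A*t3^2 - B*t3*r3 - C*r3^2"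
  have Ue: "r3 * U = t3^3" using cr3 unfolding U_def by (simp add: algebra_simps power2_eq_square power3_eq_cube)
  have "vge p (2*n) (U - 1)"
  proof -
    have "U - 1 = - (A*t3*t3 + B*t3*r3 + C*r3*r3)" unfolding U_def by (simp add: algebra_simps power2_eq_square)
    moreover have "vge p (2*n) (A*t3*t3 + B*t3*r3 + C*r3*r3)"
      by (intro vge_add[OF p] vA2[OF A vt3 vt3] vAts[OF B vt3 vr3] vAss[OF C vr3 vr3])
    ultimately show ?thesis using vge_uminus[OF p] by metis
  qed
  then have U: "U \<noteq> 0" "vp p U = 0" using unitI by auto
  have r30: "r3 \<noteq> 0" unfolding r3_def using Z3 by simp
  have t30: "t3 \<noteq> 0" using Ue r30 U by auto
  have X30: "X3 \<noteq> 0" using t30 unfolding t3_def by simp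
  have "vp p (r3 * U) = vp p (t3^3)" using Ue by simp
  then have vr3e: "vp p r3 = 3 * vp p t3" using vp_mult[OF p r30 U(1)] U vp_power[OF p t30, of 3] by simp
  have X3e: "X3 = t3 / r3" unfolding t3_def r3_def using Z3 by simp
  have "vp p X3 = vp p t3 - vp p r3" unfolding X3e using vp_divide[OF p t30 r30] .
  also have "\<dots> = -2 * vp p t3" using vr3e by simp
  finally have "vp p X3 \<le> -2*n" using vt3 t30 by (simp add: vge_def)
  then show ?thesis using Z3 X30 goal4 unfolding Z3_def by simp
qed


definition tt :: "int \<Rightarrow> (rat\<times>rat) option \<Rightarrow> rat" where
  "tt d P = (case P of None \<Rightarrow> 0 | Some (x,y) \<Rightarrow> (of_int d * x) / ((of_int d)^2 * y))"

definition lev :: "int \<Rightarrow> int \<Rightarrow> int \<Rightarrow> (rat\<times>rat) option \<Rightarrow> bool" where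
  "lev p d n P \<longleftrightarrow> (case P of None \<Rightarrow> True | Some (x,y) \<Rightarrow> x \<noteq> 0 \<and> vp p (of_int d * x) \<le> -2*n)"

lemma W_curve:
  assumes "of_int d * y^2 = ec_rhs x"
  shows "((of_int d)^2*y)^2 = (of_int d*x)^3 + (of_int (5*d))*(of_int d*x)^2 + (of_int (-152*d^2))*(of_int d*x) + of_int (-624*d^3)"
proof -
  have "((of_int d)^2*y)^2 = (of_int d)^3 * (of_int d * y^2)" by (simp add: power2_eq_square power3_eq_cube algebra_simps)
  also have "\<dots> = (of_int d)^3 * ec_rhs x" using assms by simp
  also have "\<dots> = (of_int d*x)^3 + (of_int (5*d))*(of_int d*x)^2 + (of_int (-152*d^2))*(of_int d*x) + of_int (-624*d^3)"
    by (simp add: rhs_poly algebra_simps power2_eq_square power3_eq_cube)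
  finally show ?thesis .
qed

lemma KLE:
  assumes p: "prime p" and d: "d \<noteq> 0" and n: "n \<ge> 1"
    and c1: "of_int d * y1^2 = ec_rhs x1" and c2: "of_int d * y2^2 = ec_rhs x2"
    and X1: "x1 \<noteq> 0" "vp p (of_int d * x1) \<le> -2*n" and X2: "x2 \<noteq> 0" "vp p (of_int d * x2) \<le> -2*n"
    and ni: "\<not> (x1 = x2 \<and> y1 = -y2)"
  shows "\<exists>x3 y3. ec_add d (Some (x1,y1)) (Some (x2,y2)) = Some (x3,y3) \<and> x3 \<noteq> 0 \<and>
           vp p (of_int d * x3) \<le> -2*n \<and>
           vge p (3*n) (tt d (Some (x3,y3)) - tt d (Some (x1,y1)) - tt d (Some (x2,y2)))"
proof -
  let ?D = "of_int d :: rat"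
  obtain s m x3 where l: "y1 = s*x1+m" "y2 = s*x2+m" and L: "lineid d s m x1 x2 x3"
    using LE[OF d c1 c2 ni] by blast
  have add: "ec_add d (Some (x1,y1)) (Some (x2,y2)) = Some (x3, -(s*x3+m))" using LL[OF d c1 c2 l L] .
  have L1: "?D*s^2 - 5 = x1 + x2 + x3" and L2: "2*?D*s*m + 152 = -(x1*x2 + x1*x3 + x2*x3)"
    and L3: "?D*m^2 + 624 = x1*x2*x3" using L by (auto simp: lineid_def)
  define A where "A = (of_int (5*d) :: rat)"
  define B where "B = (of_int (-152*d^2) :: rat)"
  define C where "C = (of_int (-624*d^3) :: rat)"
  have vA: "vge p 0 A" "vge p 0 B" "vge p 0 C" unfolding A_def B_def C_def by (rule vge_int[OF p])+
  have D0: "?D \<noteq> 0" using d by simp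
  have c3': "?D * (s*x3+m)^2 = ec_rhs x3" using lineid_on[OF L] .
  have w1: "(?D^2*y1)^2 = (?D*x1)^3 + A*(?D*x1)^2 + B*(?D*x1) + C" using W_curve[OF c1] unfolding A_def B_def C_def .
  have w2: "(?D^2*y2)^2 = (?D*x2)^3 + A*(?D*x2)^2 + B*(?D*x2) + C" using W_curve[OF c2] unfolding A_def B_def C_def .
  have w3: "((?D*s)*(?D*x3) + ?D^2*m)^2 = (?D*x3)^3 + A*(?D*x3)^2 + B*(?D*x3) + C"
  proof -
    have "((?D*s)*(?D*x3) + ?D^2*m) = ?D^2*(s*x3+m)" by (simp add: algebra_simps power2_eq_square)
    then show ?thesis using W_curve[OF c3'] unfolding A_def B_def C_def by simp
  qed
  have ll1: "?D^2*y1 = (?D*s)*(?D*x1) + ?D^2*m" using l(1) by (simp add: algebra_simps power2_eq_square)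
  have ll2: "?D^2*y2 = (?D*s)*(?D*x2) + ?D^2*m" using l(2) by (simp add: algebra_simps power2_eq_square)
  have ss1: "?D*x1 + ?D*x2 + ?D*x3 = (?D*s)^2 - A"
  proof -
    have "?D*x1 + ?D*x2 + ?D*x3 = ?D*(?D*s^2 - 5)" using L1 by (simp add: algebra_simps)
    then show ?thesis unfolding A_def by (simp add: algebra_simps power2_eq_square)
  qed
  have ss2: "(?D*x1)*(?D*x2) + (?D*x1)*(?D*x3) + (?D*x2)*(?D*x3) = B - 2*(?D*s)*(?D^2*m)"
  proof -
    have "(?D*x1)*(?D*x2) + (?D*x1)*(?D*x3) + (?D*x2)*(?D*x3) = ?D^2*(x1*x2 + x1*x3 + x2*x3)"
      by (simp add: algebra_simps power2_eq_square)
    also have "\<dots> = ?D^2*(-(2*?D*s*m + 152))" using L2 by simp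
    finally show ?thesis unfolding B_def by (simp add: algebra_simps power2_eq_square)
  qed
  have ss3: "(?D*x1)*(?D*x2)*(?D*x3) = (?D^2*m)^2 - C"
  proof -
    have "(?D*x1)*(?D*x2)*(?D*x3) = ?D^3*(x1*x2*x3)" by (simp add: algebra_simps power3_eq_cube)
    also have "\<dots> = ?D^3*(?D*m^2 + 624)" using L3 by simp
    finally show ?thesis unfolding C_def by (simp add: algebra_simps power2_eq_square power3_eq_cube)
  qed
  have XX1: "?D*x1 \<noteq> 0" using X1 D0 by simp
  have XX2: "?D*x2 \<noteq> 0" using X2 D0 by simp
  have cs: "?D*x1 \<noteq> ?D*x2 \<or> (?D*x1 = ?D*x2 \<and> ?D^2*y1 = ?D^2*y2 \<and>
     2*(?D*s)*(?D^2*y1) = 3*(?D*x1)^2 + 2*A*(?D*x1) + B)"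
  proof (cases "x1 = x2")
    case False then show ?thesis using D0 by simp
  next
    case True
    have yy: "y1 = y2" using True l by simp
    have "fd x1 = 2 * ?D * s * (s*x1+m)" using lineid_fd[of d s m x1 x3] L True by simp
    then have "fd x1 = 2 * ?D * s * y1" using l by simp
    then have "2*(?D*s)*(?D^2*y1) = ?D^2 * fd x1" by (simp add: algebra_simps power2_eq_square)
    also have "\<dots> = 3*(?D*x1)^2 + 2*A*(?D*x1) + B" unfolding A_def B_def fd_def
      by (simp add: algebra_simps power2_eq_square)
    finally show ?thesis using True yy by simp
  qed
  have K: "(?D*s)*(?D*x3) + ?D^2*m \<noteq> 0 \<and> ?D*x3 \<noteq> 0 \<and> vp p (?D*x3) \<le> -2*n \<and>
         vge p (3*n) ((?D*x3)/(-((?D*s)*(?D*x3) + ?D^2*m)) - (?D*x1)/(?D^2*y1) - (?D*x2)/(?D^2*y2))"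
    by (rule KLW[OF p n vA w1 w2 w3 ll1 ll2 ss1 ss2 ss3 XX1 X1(2) XX2 X2(2) cs])
  have e: "?D^2 * (-(s*x3+m)) = -((?D*s)*(?D*x3) + ?D^2*m)" by (simp add: algebra_simps power2_eq_square)
  have "tt d (Some (x3, -(s*x3+m))) = (?D*x3)/(-((?D*s)*(?D*x3) + ?D^2*m))" unfolding tt_def using e by simp
  moreover have "tt d (Some (x1,y1)) = (?D*x1)/(?D^2*y1)" "tt d (Some (x2,y2)) = (?D*x2)/(?D^2*y2)" unfolding tt_def by simp_all
  ultimately show ?thesis using K add D0 by auto
qed

lemma tt_None[simp]: "tt d None = 0" by (simp add: tt_def)

lemma tt_neg: "tt d (ec_neg P) = - tt d P"
  by (cases P) (auto simp: tt_def)

lemma orbit: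
  assumes p: "prime p" and d: "d \<noteq> 0" and n: "n \<ge> 1"
    and c: "of_int d * yr^2 = ec_rhs xr" and X: "xr \<noteq> 0" "vp p (of_int d * xr) \<le> -2*n"
  shows "lev p d n (ec_mul d j (Some (xr,yr))) \<and>
         vge p (3*n) (tt d (ec_mul d j (Some (xr,yr))) - of_nat j * tt d (Some (xr,yr)))"
proof (induction j)
  case 0 then show ?case by (simp add: lev_def tt_def)
next
  case (Suc j)
  let ?R = "Some (xr,yr)"
  let ?Q = "ec_mul d j ?R"
  have Qon: "on_curve d ?Q" using ec_mul_on[OF d] c by (simp add: on_curve_def)
  show ?case
  proof (cases ?Q)
    case None
    have ih: "vge p (3*n) (tt d ?Q - of_nat j * tt d ?R)" using Suc by simp
    have "tt d ?R - of_nat (Suc j) * tt d ?R = tt d ?Q - of_nat j * tt d ?R" using None by (simp add: algebra_simps)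
    moreover have "ec_mul d (Suc j) ?R = ?R" using None by simp
    ultimately show ?thesis using ih X by (simp add: lev_def)
  next
    case (Some q)
    obtain x y where q: "?Q = Some (x,y)" using Some by (cases q) auto
    have cq: "of_int d * y^2 = ec_rhs x" using Qon q by (simp add: on_curve_def)
    have lq: "x \<noteq> 0" "vp p (of_int d * x) \<le> -2*n" using Suc q by (auto simp: lev_def)
    have ih: "vge p (3*n) (tt d (Some (x,y)) - of_nat j * tt d ?R)" using Suc q by simp
    show ?thesis
    proof (cases "xr = x \<and> yr = -y")
      case True
      have "ec_mul d (Suc j) ?R = None" using q True by simp
      moreover have "tt d (Some (x,y)) = - tt d ?R" using True by (simp add: tt_def)
      ultimately show ?thesis using ih vge_uminus[OF p] by (simp add: lev_def algebra_simps)
    next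
      case False
      obtain x3 y3 where a: "ec_add d ?R (Some (x,y)) = Some (x3,y3)" and l3: "x3 \<noteq> 0" "vp p (of_int d * x3) \<le> -2*n"
        and v3: "vge p (3*n) (tt d (Some (x3,y3)) - tt d ?R - tt d (Some (x,y)))"
        using KLE[OF p d n c cq X lq False] by blast
      have "ec_mul d (Suc j) ?R = Some (x3,y3)" using a q by simp
      moreover have "vge p (3*n) ((tt d (Some (x3,y3)) - tt d ?R - tt d (Some (x,y))) + (tt d (Some (x,y)) - of_nat j * tt d ?R))"
        using vge_add[OF p v3 ih] .
      ultimately show ?thesis using l3 by (simp add: lev_def algebra_simps)
    qed
  qed
qed

theorem NL_int:
  assumes p: "prime p" and d: "d \<noteq> 0" and c: "of_int d * y^2 = ec_rhs x"
    and l: "prime (l::nat)" and o: "ec_mul d l (Some (x,y)) = None"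
  shows "vge p 0 (of_int d * x)"
proof (rule ccontr)
  assume ng: "\<not> vge p 0 (of_int d * x)"
  let ?D = "of_int d :: rat"
  have x0: "?D * x \<noteq> 0" and neg: "vp p (?D*x) < 0" using ng by (auto simp: vge_def)
  have w: "((of_int d)^2*y)^2 = (?D*x)^3 + (of_int (5*d))*(?D*x)^2 + (of_int (-152*d^2))*(?D*x) + of_int (-624*d^3)"
    using W_curve[OF c] .
  obtain k where Y: "(of_int d)^2*y \<noteq> 0" and k: "k \<ge> 1" "vp p (?D*x) = -2*k" "vp p ((of_int d)^2*y) = -3*k"
    using wval[OF p vge_int[OF p] vge_int[OF p] vge_int[OF p] w x0 neg] by blast
  have xr: "x \<noteq> 0" using x0 by simp
  have O: "vge p (3*k) (tt d (ec_mul d l (Some (x,y))) - of_nat l * tt d (Some (x,y)))"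
    using orbit[OF p d k(1) c xr, of l] k(2) by simp
  have ttv: "vp p (tt d (Some (x,y))) = k" unfolding tt_def using vp_divide[OF p x0 Y] k by simp
  have tt0: "tt d (Some (x,y)) \<noteq> 0" unfolding tt_def using x0 Y by simp
  have l0: "(of_nat l :: rat) \<noteq> 0" using l by (simp add: prime_gt_0_nat)
  have "vge p (3*k) (of_nat l * tt d (Some (x,y)))" using vge_uminus[OF p O] o by (simp add: tt_def)
  then have "3*k \<le> vp p (of_nat l * tt d (Some (x,y)))" using l0 tt0 by (simp add: vge_def)
  also have "\<dots> = vp p (of_int (int l)) + k" using vp_mult[OF p l0 tt0] ttv by simp
  also have "\<dots> \<le> 1 + k" using vp_int_le1[OF p, of "int l"] l by simp
  finally show False using k by linarith
qed


lemma sqf_unit: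
  fixes g c d :: int
  assumes "coprime g c" "g^2 dvd c * d" "squarefree d" shows "is_unit g"
proof -
  have "coprime (g^2) c" using assms(1) by simp
  then have "g^2 dvd d" using assms(2) by (simp add: coprime_dvd_mult_right_iff)
  then show ?thesis using assms(3) unfolding squarefree_def by blast
qed

lemma sqf_gcd3:
  fixes g d :: int
  assumes "g^2 dvd 9 * d" "squarefree d" shows "g dvd 3"
proof (cases "3 dvd g")
  case True
  then obtain h where h: "g = 3*h" by blast
  have "9 * h^2 dvd 9 * d" using assms(1) h by (simp add: power2_eq_square algebra_simps)
  then have "h^2 dvd d" by simp
  then have "is_unit h" using assms(2) unfolding squarefree_def by blast
  then show ?thesis using h by auto
next
  case False
  have "prime (3::int)" by simp
  then have "coprime g 3" using prime_imp_coprime[OF \<open>prime (3::int)\<close> False] by (simp add: coprime_commute)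
  then have "coprime g (3^2)" by (subst coprime_power_right_iff) simp
  then have "coprime g 9" by simp
  then have "is_unit g" using sqf_unit assms by blast
  then show ?thesis by (rule unit_imp_dvd)
qed

lemma sqf_gcd5:
  fixes g d :: int
  assumes "g^2 dvd 25 * d" "squarefree d" shows "g dvd 5"
proof (cases "5 dvd g")
  case True
  then obtain h where h: "g = 5*h" by blast
  have "25 * h^2 dvd 25 * d" using assms(1) h by (simp add: power2_eq_square algebra_simps)
  then have "h^2 dvd d" by (metis dvd_mult_cancel_left zero_neq_numeral)
  then have "is_unit h" using assms(2) unfolding squarefree_def by blast
  then show ?thesis using h by auto
next
  case False
  have "prime (5::int)" by simp
  then have "coprime g 5" using prime_imp_coprime[OF \<open>prime (5::int)\<close> False] by (simp add: coprime_commute)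
  then have "coprime g (5^2)" by (subst coprime_power_right_iff) simp
  then have "coprime g 25" by simp
  then have "is_unit g" using sqf_unit assms by blast
  then show ?thesis by (rule unit_imp_dvd)
qed

lemma sqf_gcd4:
  fixes g d :: int
  assumes "g^2 dvd 16 * d" "squarefree d" shows "g dvd 4"
proof (cases "2 dvd g")
  case True
  then obtain h where h: "g = 2*h" by blast
  have "4 * h^2 dvd 4 * (4 * d)" using assms(1) h by (simp add: power2_eq_square algebra_simps)
  then have h4: "h^2 dvd 4 * d" by (metis dvd_mult_cancel_left zero_neq_numeral)
  show ?thesis
  proof (cases "2 dvd h")
    case True
    then obtain k where k: "h = 2*k" by blast
    have "4 * k^2 dvd 4 * d" using h4 k by (simp add: power2_eq_square algebra_simps)
    then have "k^2 dvd d" by (metis dvd_mult_cancel_left zero_neq_numeral)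
    then have "is_unit k" using assms(2) unfolding squarefree_def by blast
    then show ?thesis using h k by auto
  next
    case False
    have "prime (2::int)" by simp
    then have "coprime h 2" using prime_imp_coprime[OF \<open>prime (2::int)\<close> False] by (simp add: coprime_commute)
    then have "coprime h (2^2)" by (subst coprime_power_right_iff) simp
    then have "coprime h 4" by simp
    then have "is_unit h" using sqf_unit h4 assms(2) by blast
    then show ?thesis using h mult_dvd_mono[of 2 2 h 2] unit_imp_dvd[of h 2] by simp
  qed
next
  case False
  have "prime (2::int)" by simp
  then have "coprime g 2" using prime_imp_coprime[OF \<open>prime (2::int)\<close> False] by (simp add: coprime_commute)
  then have "coprime g (2^4)" by (subst coprime_power_right_iff) simp
  then have "coprime g 16" by simp
  then have "is_unit g" using sqf_unit assms by blast
  then show ?thesis by (rule unit_imp_dvd)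
qed

lemma dvd_sq_gcd:
  fixes a b :: int
  assumes "u dvd a" "u dvd b^2" shows "u dvd (gcd a b)^2"
proof -
  have "u dvd gcd (a^2) (b^2)" using assms by (simp add: dvd_mult2 power2_eq_square)
  then show ?thesis by simp
qed

lemma dvd_prod_bound:
  fixes a b c :: int
  assumes "a dvd b^2 * c^2" "gcd a b dvd m" "gcd a c dvd k"
  shows "a dvd m^2 * k^2"
proof -
  obtain u v where uv: "a = u * v" "u dvd b^2" "v dvd c^2" using dvd_productE[OF assms(1)] by blast
  have "u dvd (gcd a b)^2" using uv by (intro dvd_sq_gcd) auto
  also have "\<dots> dvd m^2" using assms(2) by (simp add: dvd_power_same)
  finally have u: "u dvd m^2" .
  have "v dvd (gcd a c)^2" using uv by (intro dvd_sq_gcd) auto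
  also have "\<dots> dvd k^2" using assms(3) by (simp add: dvd_power_same)
  finally have v: "v dvd k^2" .
  show ?thesis using uv(1) mult_dvd_mono[OF u v] by simp
qed


lemma divs225: fixes a :: int assumes "0 < a" "a dvd 225" shows "a \<in> {1,3,5,9,15,25,45,75,225}"
proof -
  have "a \<le> 225" using assms by (simp add: zdvd_imp_le)
  then have "a \<in> set [1..225]" using assms by simp
  moreover have "\<forall>b \<in> set [1..225::int]. b dvd 225 \<longrightarrow> b \<in> {1,3,5,9,15,25,45,75,225}"
    by code_simp
  ultimately show ?thesis using assms by blast
qed

lemma divs144: fixes a :: int assumes "0 < a" "a dvd 144" shows "a \<in> {1,2,3,4,6,8,9,12,16,18,24,36,48,72,144}"
proof -
  have "a \<le> 144" using assms by (simp add: zdvd_imp_le)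
  then have "a \<in> set [1..144]" using assms by simp
  moreover have "\<forall>b \<in> set [1..144::int]. b dvd 144 \<longrightarrow> b \<in> {1,2,3,4,6,8,9,12,16,18,24,36,48,72,144}"
    by code_simp
  ultimately show ?thesis using assms by blast
qed

lemma divs400: fixes a :: int assumes "0 < a" "a dvd 400" shows "a \<in> {1,2,4,5,8,10,16,20,25,40,50,80,100,200,400}"
proof -
  have "a \<le> 400" using assms by (simp add: zdvd_imp_le)
  then have "a \<in> set [1..400]" using assms by simp
  moreover have "\<forall>b \<in> set [1..400::int]. b dvd 400 \<longrightarrow> b \<in> {1,2,4,5,8,10,16,20,25,40,50,80,100,200,400}"
    by code_simp
  ultimately show ?thesis using assms by blast
qed

lemma search:
  "\<forall>a1\<in>{1,3,5,9,15,25,45,75,225::int}. \<forall>a2\<in>{1,2,3,4,6,8,9,12,16,18,24,36,48,72,144::int}.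
    \<forall>a3\<in>{1,2,4,5,8,10,16,20,25,40,50,80,100,200,400::int}.
     16*a1^2 - 25*a2^2 + 9*a3^2 = 0 \<longrightarrow> \<not> (2*a1*a2*a3 dvd a2^2*a3^2 + a1^2*a3^2 + a1^2*a2^2)"
  by code_simp

lemma gcd_sq_dvd_diff: fixes a b :: int shows "(gcd a b)^2 dvd a^2 - b^2"
proof -
  have "(gcd a b)^2 dvd a^2" "(gcd a b)^2 dvd b^2" by (simp_all add: dvd_power_same)
  then show ?thesis by (rule dvd_diff)
qed

lemma NT_main:
  fixes a1 a2 a3 d :: int
  assumes sq: "squarefree d" and pos: "a1 > 0" "a2 > 0" "a3 > 0"
    and e1: "a1^2 - a2^2 = 9*d" and e2: "a2^2 - a3^2 = 16*d"
    and dv: "2*a1*a2*a3 dvd a2^2*a3^2 + a1^2*a3^2 + a1^2*a2^2"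
  shows False
proof -
  have e3: "a1^2 - a3^2 = 25*d" using e1 e2 by simp
  have g12: "gcd a1 a2 dvd 3" using sqf_gcd3[OF _ sq] gcd_sq_dvd_diff[of a1 a2] e1 by simp
  have g23: "gcd a2 a3 dvd 4" using sqf_gcd4[OF _ sq] gcd_sq_dvd_diff[of a2 a3] e2 by simp
  have g13: "gcd a1 a3 dvd 5" using sqf_gcd5[OF _ sq] gcd_sq_dvd_diff[of a1 a3] e3 by simp
  have S1: "a1 dvd a2^2*a3^2"
  proof -
    have "a1 dvd a2^2*a3^2 + a1^2*a3^2 + a1^2*a2^2" using dv by (metis dvd_mult_left mult.assoc mult.commute)
    moreover have "a1 dvd a1^2*a3^2 + a1^2*a2^2" by (simp add: power2_eq_square)
    ultimately show ?thesis by (metis add.assoc dvd_add_left_iff)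
  qed
  have S2: "a2 dvd a1^2*a3^2"
  proof -
    have "a2 dvd a2^2*a3^2 + a1^2*a3^2 + a1^2*a2^2" using dv by (metis dvd_mult_left mult.assoc mult.commute)
    moreover have "a2 dvd a2^2*a3^2 + a1^2*a2^2" by (simp add: power2_eq_square)
    ultimately show ?thesis by (metis add.commute add.left_commute dvd_add_right_iff)
  qed
  have S3: "a3 dvd a1^2*a2^2"
  proof -
    have "a3 dvd a2^2*a3^2 + a1^2*a3^2 + a1^2*a2^2" using dv by (metis dvd_mult_left mult.commute)
    moreover have "a3 dvd a2^2*a3^2 + a1^2*a3^2" by (simp add: power2_eq_square)
    ultimately show ?thesis by (metis dvd_add_right_iff)
  qed
  have "a1 dvd 3^2*5^2" using dvd_prod_bound[OF S1 g12 g13] .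
  then have A1: "a1 \<in> {1,3,5,9,15,25,45,75,225}" using divs225 pos by simp
  have g21: "gcd a2 a1 dvd 3" using g12 by (simp add: gcd.commute)
  have g31: "gcd a3 a1 dvd 5" using g13 by (simp add: gcd.commute)
  have g32: "gcd a3 a2 dvd 4" using g23 by (simp add: gcd.commute)
  have "a2 dvd 3^2*4^2" using dvd_prod_bound[OF S2 g21 g23] .
  then have A2: "a2 \<in> {1,2,3,4,6,8,9,12,16,18,24,36,48,72,144}" using divs144 pos by simp
  have "a3 dvd 5^2*4^2" using dvd_prod_bound[OF S3 g31 g32] .
  then have A3: "a3 \<in> {1,2,4,5,8,10,16,20,25,40,50,80,100,200,400}" using divs400 pos by simp
  have eq: "16*a1^2 - 25*a2^2 + 9*a3^2 = 0" using e1 e2 by simp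
  show False using search A1 A2 A3 eq dv by blast
qed


lemma rat_sq_int: fixes r :: rat assumes "r^2 \<in> \<int>" shows "r \<in> \<int>"
proof (rule int_of_vge)
  fix p :: int assume p: "prime p"
  show "vge p 0 r"
  proof (cases "r = 0")
    case True then show ?thesis by simp
  next
    case False
    have "vge p 0 (r^2)" using vge_of_Ints[OF p assms] .
    then have "0 \<le> vp p (r^2)" using False by (simp add: vge_def)
    then have "0 \<le> 2 * vp p r" using vp_power[OF p False, of 2] by simp
    then show ?thesis using False by (simp add: vge_def)
  qed
qed

lemma sqf_nonzero: "squarefree (d::int) \<Longrightarrow> d \<noteq> 0"
proof
  assume "squarefree d" "d = 0"
  then have "is_unit (2::int)" unfolding squarefree_def by (metis dvd_0_right)
  then show False by simp
qed

lemma halving: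
  assumes d: "d \<noteq> 0" and ch: "of_int d * yh^2 = ec_rhs xh" and yh: "yh \<noteq> 0"
    and a: "ec_add d (Some (xh,yh)) (Some (xh,yh)) = Some (x,y)" and e: "ec_rhs e = 0"
  shows "\<exists>r. of_int d * (x - e) = r^2"
proof -
  have ni: "\<not> (xh = xh \<and> yh = -yh)" using yh by simp
  obtain s m x3 where l: "yh = s*xh+m" and L: "lineid d s m xh xh x3"
    using LE[OF d ch ch ni] by blast
  have "ec_add d (Some (xh,yh)) (Some (xh,yh)) = Some (x3, -(s*x3+m))" using LL[OF d ch ch l l L] .
  then have x3: "x3 = x" using a by simp
  have pe: "of_int d * (s*e+m)^2 = (xh - e)^2 * (x - e)"
    using lineid_poly[OF L, of e] e x3 by (simp add: power2_eq_square algebra_simps)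
  have xe: "xh \<noteq> e" using ch e yh d by auto
  define r where "r = of_int d * (s*e+m) / (xh - e)"
  have "r^2 = of_int d * (of_int d * (s*e+m)^2) / (xh - e)^2" unfolding r_def by (simp add: power2_eq_square)
  also have "\<dots> = of_int d * (x - e)" unfolding pe using xe by simp
  finally show ?thesis by metis
qed

lemma doubling_lambda:
  assumes d: "d \<noteq> 0" and y: "y \<noteq> 0"
    and a: "ec_add d (Some (x,y)) (Some (x,y)) = Some (x2,y2)"
  shows "(fd x / (2*y))^2 = of_int d * x2 + 5 * of_int d + 2 * (of_int d * x)"
proof -
  define l where "l = (3 * x^2 + 10 * x - 152) / (2 * of_int d * y)"
  have x2: "x2 = of_int d * l^2 - 5 - x - x" using a y unfolding l_def by (simp add: Let_def)
  have "fd x / (2*y) = of_int d * l" unfolding l_def fd_def using d by simp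
  then have "(fd x / (2*y))^2 = of_int d * (of_int d * l^2)" by (simp add: power2_eq_square algebra_simps)
  also have "\<dots> = of_int d * (x2 + 5 + 2*x)" using x2 by simp
  finally show ?thesis by (simp add: algebra_simps)
qed

lemma Ints_obtain: fixes r :: rat assumes "r \<in> \<int>" obtains z where "r = of_int z"
  using assms by (auto elim: Ints_cases)

theorem no_odd_torsion:
  assumes sq: "squarefree d" and c: "of_int d * y^2 = ec_rhs x" and y: "y \<noteq> 0"
    and l: "prime (l::nat)" "odd l" and o: "ec_mul d l (Some (x,y)) = None"
  shows False
proof -
  let ?D = "of_int d :: rat"
  let ?G = "ec_group d"
  have d: "d \<noteq> 0" using sqf_nonzero[OF sq] .
  interpret G: comm_group ?G by (rule ec_comm_group[OF d])
  define R where "R = Some (x,y)"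
  have Ron: "on_curve d R" using c by (simp add: R_def on_curve_def)
  have RG: "R \<in> carrier ?G" using Ron by simp
  have Rl: "R [^]\<^bsub>?G\<^esub> l = None" using o ec_mul_pow[OF d Ron, of l] by (simp add: R_def)
  define R2 where "R2 = ec_add d R R"
  have R2p: "R2 = R [^]\<^bsub>?G\<^esub> (2::nat)" unfolding R2_def using RG by (simp add: numeral_2_eq_2)
  have R2on: "on_curve d R2" unfolding R2_def using add_on[OF d Ron Ron] .
  have R2N: "R2 \<noteq> None"
  proof
    assume "R2 = None"
    then have "R = ec_neg R" using add_eq_None unfolding R2_def by metis
    then show False using y by (simp add: R_def)
  qed
  have R2l: "R2 [^]\<^bsub>?G\<^esub> l = None"
  proof -
    have "R2 [^]\<^bsub>?G\<^esub> l = R [^]\<^bsub>?G\<^esub> (2 * l)" unfolding R2p using G.nat_pow_pow[OF RG] by simp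
    also have "\<dots> = (R [^]\<^bsub>?G\<^esub> l) [^]\<^bsub>?G\<^esub> (2::nat)" using G.nat_pow_pow[OF RG, of l 2] by (simp add: mult.commute)
    also have "\<dots> = \<one>\<^bsub>?G\<^esub> [^]\<^bsub>?G\<^esub> (2::nat)" using Rl by simp
    also have "\<dots> = None" using G.nat_pow_one by simp
    finally show ?thesis .
  qed
  obtain x2 y2 where R2e: "R2 = Some (x2,y2)" using R2N by (cases R2) auto
  have c2: "?D * y2^2 = ec_rhs x2" using R2on R2e by (simp add: on_curve_def)
  have o2: "ec_mul d l (Some (x2,y2)) = None" using R2l ec_mul_pow[OF d R2on, of l] R2e by simp
  have XI: "?D * x \<in> \<int>" by (rule int_of_vge) (rule NL_int[OF _ d c l(1) o])
  have X2I: "?D * x2 \<in> \<int>" by (rule int_of_vge) (rule NL_int[OF _ d c2 l(1) o2])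
  define H where "H = R [^]\<^bsub>?G\<^esub> ((l+1) div 2)"
  have HG: "H \<in> carrier ?G" unfolding H_def by (rule G.nat_pow_closed[OF RG])
  have HH: "ec_add d H H = R"
  proof -
    have "ec_add d H H = H [^]\<^bsub>?G\<^esub> (2::nat)" using HG by (simp add: numeral_2_eq_2)
    also have "\<dots> = R [^]\<^bsub>?G\<^esub> (((l+1) div 2) * 2)" unfolding H_def using G.nat_pow_pow[OF RG] by simp
    also have "((l+1) div 2) * 2 = l + 1" using l(2) by (metis odd_two_times_div_two_succ even_Suc Suc_eq_plus1 dvd_mult_div_cancel mult.commute)
    also have "R [^]\<^bsub>?G\<^esub> (l+1) = R" using Rl RG by simp
    finally show ?thesis .
  qed
  have HN: "H \<noteq> None"
  proof
    assume "H = None" then have "ec_add d H H = None" by simp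
    then show False using HH by (simp add: R_def)
  qed
  obtain xh yh where He: "H = Some (xh,yh)" using HN by (cases H) auto
  have ch: "?D * yh^2 = ec_rhs xh" using HG He by (simp add: on_curve_def)
  have yh: "yh \<noteq> 0"
  proof
    assume "yh = 0"
    then have "ec_add d H H = None" using He by simp
    then show False using HH by (simp add: R_def)
  qed
  have aH: "ec_add d (Some (xh,yh)) (Some (xh,yh)) = Some (x,y)" using HH He by (simp add: R_def)
  obtain r1 where r1: "?D * (x - (-13)) = r1^2" using halving[OF d ch yh aH, of "-13"] by (auto simp: ec_rhs_def)
  obtain r2 where r2: "?D * (x - (-4)) = r2^2" using halving[OF d ch yh aH, of "-4"] by (auto simp: ec_rhs_def)
  obtain r3 where r3: "?D * (x - 12) = r3^2" using halving[OF d ch yh aH, of "12"] by (auto simp: ec_rhs_def)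
  obtain Xi where Xi: "?D * x = of_int Xi" using XI Ints_obtain by blast
  obtain X2i where X2i: "?D * x2 = of_int X2i" using X2I Ints_obtain by blast
  have "r1^2 = of_int (Xi + 13*d)" using r1 Xi by (simp add: algebra_simps)
  then have "r1 \<in> \<int>" using rat_sq_int by (metis Ints_of_int)
  then obtain b1 where b1: "r1 = of_int b1" using Ints_obtain by blast
  have "r2^2 = of_int (Xi + 4*d)" using r2 Xi by (simp add: algebra_simps)
  then have "r2 \<in> \<int>" using rat_sq_int by (metis Ints_of_int)
  then obtain b2 where b2: "r2 = of_int b2" using Ints_obtain by blast
  have "r3^2 = of_int (Xi - 12*d)" using r3 Xi by (simp add: algebra_simps)
  then have "r3 \<in> \<int>" using rat_sq_int by (metis Ints_of_int)
  then obtain b3 where b3: "r3 = of_int b3" using Ints_obtain by blast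
  have "(of_int (b1^2) :: rat) = of_int (Xi + 13*d)" using r1 Xi b1 by (simp add: algebra_simps)
  then have e1: "b1^2 = Xi + 13*d" using of_int_eq_iff by blast
  have "(of_int (b2^2) :: rat) = of_int (Xi + 4*d)" using r2 Xi b2 by (simp add: algebra_simps)
  then have e2: "b2^2 = Xi + 4*d" using of_int_eq_iff by blast
  have "(of_int (b3^2) :: rat) = of_int (Xi - 12*d)" using r3 Xi b3 by (simp add: algebra_simps)
  then have e3: "b3^2 = Xi - 12*d" using of_int_eq_iff by blast
  have f1: "?D*x + 13*?D = of_int (b1^2)" using e1 Xi by simp
  have f2: "?D*x + 4*?D = of_int (b2^2)" using e2 Xi by simp
  have f3: "?D*x - 12*?D = of_int (b3^2)" using e3 Xi by simp
  define lam where "lam = fd x / (2*y)"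
  have "ec_add d (Some (x,y)) (Some (x,y)) = Some (x2,y2)" using R2e by (simp add: R2_def R_def)
  then have "lam^2 = ?D * x2 + 5 * ?D + 2 * (?D * x)" unfolding lam_def by (rule doubling_lambda[OF d y])
  then have "lam^2 = of_int (X2i + 5*d + 2*Xi)" using Xi X2i by simp
  then have "lam \<in> \<int>" using rat_sq_int by (metis Ints_of_int)
  then obtain L where L: "lam = of_int L" using Ints_obtain by blast
  define Y where "Y = ?D^2 * y"
  have Y0: "Y \<noteq> 0" using y d by (simp add: Y_def)
  have "Y^2 = ?D^3 * (?D * y^2)" unfolding Y_def by (simp add: power2_eq_square power3_eq_cube algebra_simps)
  also have "\<dots> = (?D*x + 13*?D) * (?D*x + 4*?D) * (?D*x - 12*?D)" unfolding c
    by (simp add: ec_rhs_def power3_eq_cube algebra_simps)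
  also have "\<dots> = of_int (b1*b2*b3)^2" unfolding f1 f2 f3 by (simp add: power_mult_distrib)
  finally have "Y = of_int (b1*b2*b3) \<or> Y = - of_int (b1*b2*b3)" by (simp add: power2_eq_iff)
  then obtain sg :: int where sg: "Y = of_int (sg*(b1*b2*b3))" "sg = 1 \<or> sg = -1" by (metis mult_1 mult_minus1 of_int_minus)
  have "2*Y*lam = ?D^2 * fd x" unfolding Y_def lam_def using y by (simp add: field_simps power2_eq_square)
  also have "\<dots> = (?D*x + 4*?D)*(?D*x - 12*?D) + (?D*x + 13*?D)*(?D*x - 12*?D) + (?D*x + 13*?D)*(?D*x + 4*?D)"
    by (simp add: fd_def power2_eq_square algebra_simps)
  also have "\<dots> = of_int (b2^2*b3^2 + b1^2*b3^2 + b1^2*b2^2)" unfolding f1 f2 f3 by simp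
  finally have "of_int (2*(sg*(b1*b2*b3))*L) = (of_int (b2^2*b3^2 + b1^2*b3^2 + b1^2*b2^2) :: rat)"
    using sg L by simp
  then have S: "2*(sg*(b1*b2*b3))*L = b2^2*b3^2 + b1^2*b3^2 + b1^2*b2^2" by (metis of_int_eq_iff)
  define a1 where "a1 = \<bar>b1\<bar>"
  define a2 where "a2 = \<bar>b2\<bar>"
  define a3 where "a3 = \<bar>b3\<bar>"
  have bb: "b1*b2*b3 \<noteq> 0" using Y0 sg by auto
  have pos: "a1 > 0" "a2 > 0" "a3 > 0" using bb unfolding a1_def a2_def a3_def by auto
  have sqs: "a1^2 = b1^2" "a2^2 = b2^2" "a3^2 = b3^2" unfolding a1_def a2_def a3_def by simp_all
  have E1: "a1^2 - a2^2 = 9*d" using e1 e2 sqs by simp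
  have E2: "a2^2 - a3^2 = 16*d" using e2 e3 sqs by simp
  have "2*(b1*b2*b3) dvd b2^2*b3^2 + b1^2*b3^2 + b1^2*b2^2" unfolding S[symmetric]
    using sg(2) by auto
  then have "\<bar>2*(b1*b2*b3)\<bar> dvd b2^2*b3^2 + b1^2*b3^2 + b1^2*b2^2" by (simp only: abs_dvd_iff)
  then have "2*a1*a2*a3 dvd a2^2*a3^2 + a1^2*a3^2 + a1^2*a2^2"
    unfolding sqs a1_def a2_def a3_def by (simp add: abs_mult mult.assoc)
  then show False using NT_main[OF sq pos E1 E2] by simp
qed


lemma rhs_roots: "ec_rhs e = 0 \<longleftrightarrow> e = -13 \<or> e = -4 \<or> e = 12"
  by (auto simp: ec_rhs_def)

lemma two_tors:
  assumes d: "d \<noteq> 0" and P: "on_curve d P" and a: "ec_add d P P = None"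
  shows "P = None \<or> (\<exists>e. P = Some (e,0) \<and> ec_rhs e = 0)"
proof (cases P)
  case None then show ?thesis by simp
next
  case (Some q)
  obtain x y where q: "P = Some (x,y)" using Some by (cases q) auto
  have "P = ec_neg P" using add_eq_None[OF a] .
  then have "y = 0" using q by simp
  then show ?thesis using P q by (simp add: on_curve_def)
qed

lemma sqf_sq1: assumes sq: "squarefree d" and e: "(of_int d :: rat) = r^2" shows "d = 1"
proof -
  have "r^2 \<in> \<int>" using e[symmetric] by simp
  then have "r \<in> \<int>" by (rule rat_sq_int)
  then obtain k where k: "r = of_int k" using Ints_obtain by blast
  have "(of_int d :: rat) = of_int (k^2)" using e k by simp
  then have dk: "d = k^2" using of_int_eq_iff by blast
  then have "k^2 dvd d" by simp
  then have "is_unit k" using sq unfolding squarefree_def by blast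
  then have "\<bar>k\<bar> = 1" by (simp add: zdvd1_eq)
  then have "k^2 = 1" using power2_abs[of k] by simp
  then show ?thesis using dk by simp
qed

lemma sqf_sqm1: assumes sq: "squarefree d" and e: "- (of_int d :: rat) = r^2" shows "d = -1"
proof -
  have sq': "squarefree (-d)" using sq by (simp add: squarefree_minus)
  have "(of_int (-d) :: rat) = r^2" using e by simp
  then have "-d = 1" by (rule sqf_sq1[OF sq'])
  then show ?thesis by simp
qed

lemma order4:
  assumes sq: "squarefree d" and c: "of_int d * y^2 = ec_rhs x"
    and a: "ec_add d (Some (x,y)) (Some (x,y)) = Some (e, 0)"
  shows "(d = 1 \<and> (x,y) \<in> {(-8,20),(-8,-20),(32,180),(32,-180)}) \<or>
         (d = -1 \<and> (x,y) \<in> {(2,30),(2,-30),(-28,120),(-28,-120)})"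
proof -
  let ?D = "of_int d :: rat"
  have d: "d \<noteq> 0" using sqf_nonzero[OF sq] .
  have y: "y \<noteq> 0" using a by (auto simp: Let_def split: if_splits)
  have ni: "\<not> (x = x \<and> y = -y)" using y by simp
  obtain s m x3 where l: "y = s*x+m" and L: "lineid d s m x x x3" using LE[OF d c c ni] by blast
  have "ec_add d (Some (x,y)) (Some (x,y)) = Some (x3, -(s*x3+m))" using LL[OF d c c l l L] .
  then have x3: "x3 = e" and me: "s*e + m = 0" using a by auto
  have fe: "ec_rhs e = 0" using lineid_on[OF L] x3 me by simp
  have L1: "?D*s^2 - 5 = x + x + e" and L2: "2*?D*s*m + 152 = -(x*x + x*e + x*e)"
    using L x3 by (auto simp: lineid_def)
  have m: "m = -s*e" using me by simp
  have "2*?D*s*m = -2*e*(?D*s^2)" unfolding m by (simp add: power2_eq_square algebra_simps)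
  also have "\<dots> = -2*e*(5 + 2*x + e)" using L1 by simp
  finally have c1: "2*?D*s*m = -2*e*(5 + 2*x + e)" .
  have h: "-2*e*(5 + 2*x + e) + 152 = -(x*x + x*e + x*e)" using L2 unfolding c1 .
  have "(x-e)^2 - (3*e^2 + 10*e - 152) = (-2*e*(5 + 2*x + e) + 152) - (-(x*x + x*e + x*e))"
    by (simp add: algebra_simps power2_eq_square)
  then have xe: "(x - e)^2 = 3*e^2 + 10*e - 152" unfolding h by simp
  have "e = -13 \<or> e = -4 \<or> e = 12" using fe rhs_roots by blast
  then show ?thesis
  proof (elim disjE)
    assume e: "e = -13"
    then have "(x + 13)^2 = 15^2" using xe by simp
    then have "x + 13 = 15 \<or> x + 13 = -15" by (simp only: power2_eq_iff)
    then have "x = 2 \<or> x = -28" by auto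
    then show ?thesis
    proof
      assume xx: "x = 2"
      then have cy: "?D * y^2 = -900" using c by (simp add: ec_rhs_def)
      then have "- ?D * y^2 = 900" by simp
      then have "- ?D = 900 / y^2" using y by (simp add: eq_divide_eq)
      then have "- ?D = (30/y)^2" by (simp add: power_divide)
      then have dd: "d = -1" by (rule sqf_sqm1[OF sq])
      then have "y^2 = 30^2" using cy by simp
      then have "y = 30 \<or> y = -30" by (simp only: power2_eq_iff)
      then show ?thesis using xx dd by auto
    next
      assume xx: "x = -28"
      then have cy: "?D * y^2 = -14400" using c by (simp add: ec_rhs_def)
      then have "- ?D * y^2 = 14400" by simp
      then have "- ?D = 14400 / y^2" using y by (simp add: eq_divide_eq)
      then have "- ?D = (120/y)^2" by (simp add: power_divide)
      then have dd: "d = -1" by (rule sqf_sqm1[OF sq])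
      then have "y^2 = 120^2" using cy by simp
      then have "y = 120 \<or> y = -120" by (simp only: power2_eq_iff)
      then show ?thesis using xx dd by auto
    qed
  next
    assume e: "e = -4"
    then have "(x + 4)^2 = -144" using xe by simp
    moreover have "(x+4)^2 \<ge> 0" by simp
    ultimately show ?thesis by simp
  next
    assume e: "e = 12"
    then have "(x - 12)^2 = 20^2" using xe by simp
    then have "x - 12 = 20 \<or> x - 12 = -20" by (simp only: power2_eq_iff)
    then have "x = 32 \<or> x = -8" by auto
    then show ?thesis
    proof
      assume xx: "x = 32"
      then have cy: "?D * y^2 = 32400" using c by (simp add: ec_rhs_def)
      then have "?D = 32400 / y^2" using y by (simp add: eq_divide_eq)
      then have "?D = (180/y)^2" by (simp add: power_divide)
      then have dd: "d = 1" by (rule sqf_sq1[OF sq])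
      then have "y^2 = 180^2" using cy by simp
      then have "y = 180 \<or> y = -180" by (simp only: power2_eq_iff)
      then show ?thesis using xx dd by auto
    next
      assume xx: "x = -8"
      then have cy: "?D * y^2 = 400" using c by (simp add: ec_rhs_def)
      then have "?D = 400 / y^2" using y by (simp add: eq_divide_eq)
      then have "?D = (20/y)^2" by (simp add: power_divide)
      then have dd: "d = 1" by (rule sqf_sq1[OF sq])
      then have "y^2 = 20^2" using cy by simp
      then have "y = 20 \<or> y = -20" by (simp only: power2_eq_iff)
      then show ?thesis using xx dd by auto
    qed
  qed
qed

lemma not_rat_sq: assumes "(of_int n :: rat) = r^2" "n \<in> {5, 45, 15}" shows False
proof -
  have "r^2 \<in> \<int>" using assms(1)[symmetric] by simp
  then have "r \<in> \<int>" by (rule rat_sq_int)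
  then obtain k where k: "r = of_int k" using Ints_obtain by blast
  have "(of_int n :: rat) = of_int (k^2)" using assms(1) k by simp
  then have nk: "n = k^2" using of_int_eq_iff by blast
  have "k^2 \<le> 7^2" using nk assms(2) by auto
  then have "\<bar>k\<bar> \<le> 7" using abs_le_square_iff[of k 7] by simp
  then have "k \<in> set [-7..7]" by auto
  moreover have "\<forall>j \<in> set [-7..7::int]. j^2 \<notin> {5, 45, 15}" by code_simp
  ultimately show False using nk assms(2) by auto
qed

lemma no_order8:
  assumes sq: "squarefree d" and PG: "P \<in> carrier (ec_group d)"
    and P8: "P [^]\<^bsub>ec_group d\<^esub> (8::nat) = None"
  shows "P [^]\<^bsub>ec_group d\<^esub> (4::nat) = None"
proof (rule ccontr)
  assume P4: "P [^]\<^bsub>ec_group d\<^esub> (4::nat) \<noteq> None"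
  let ?G = "ec_group d"
  let ?D = "of_int d :: rat"
  have d: "d \<noteq> 0" using sqf_nonzero[OF sq] .
  interpret G: comm_group ?G by (rule ec_comm_group[OF d])
  have Pon: "on_curve d P" using PG by simp
  define T where "T = ec_add d P P"
  have TP: "T = P [^]\<^bsub>?G\<^esub> (2::nat)" unfolding T_def using PG by (simp add: numeral_2_eq_2)
  have TG: "T \<in> carrier ?G" unfolding TP by (rule G.nat_pow_closed[OF PG])
  define U where "U = ec_add d T T"
  have UP: "U = P [^]\<^bsub>?G\<^esub> (4::nat)"
  proof -
    have "U = T [^]\<^bsub>?G\<^esub> (2::nat)" unfolding U_def using TG by (simp add: numeral_2_eq_2)
    also have "\<dots> = P [^]\<^bsub>?G\<^esub> (2*2::nat)" unfolding TP using G.nat_pow_pow[OF PG] by simp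
    finally show ?thesis by simp
  qed
  have UG: "U \<in> carrier ?G" unfolding UP by (rule G.nat_pow_closed[OF PG])
  have UU: "ec_add d U U = None"
  proof -
    have "ec_add d U U = U [^]\<^bsub>?G\<^esub> (2::nat)" using UG by (simp add: numeral_2_eq_2)
    also have "\<dots> = P [^]\<^bsub>?G\<^esub> (4*2::nat)" unfolding UP using G.nat_pow_pow[OF PG] by simp
    finally show ?thesis using P8 by simp
  qed
  have U0: "U \<noteq> None" using P4 UP by simp
  obtain e where Ue: "U = Some (e,0)" using two_tors[OF d _ UU] UG U0 by auto
  have TN: "T \<noteq> None"
  proof
    assume "T = None" then have "U = None" unfolding U_def by simp
    then show False using U0 by simp
  qed
  obtain xt yt where Te: "T = Some (xt,yt)" using TN by (cases T) auto
  have ct: "?D * yt^2 = ec_rhs xt" using TG Te by (simp add: on_curve_def)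
  have "ec_add d (Some (xt,yt)) (Some (xt,yt)) = Some (e,0)" using Ue Te U_def by simp
  then have O4: "(d = 1 \<and> (xt,yt) \<in> {(-8,20),(-8,-20),(32,180),(32,-180)}) \<or>
         (d = -1 \<and> (xt,yt) \<in> {(2,30),(2,-30),(-28,120),(-28,-120)})" using order4[OF sq ct] by simp
  have PN: "P \<noteq> None"
  proof
    assume "P = None" then have "T = None" unfolding T_def by simp
    then show False using TN by simp
  qed
  obtain xp yp where Pe: "P = Some (xp,yp)" using PN by (cases P) auto
  have cp: "?D * yp^2 = ec_rhs xp" using Pon Pe by (simp add: on_curve_def)
  have yp: "yp \<noteq> 0" using TN Pe unfolding T_def by auto
  have "ec_add d (Some (xp,yp)) (Some (xp,yp)) = Some (xt,yt)" using Te Pe T_def by simp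
  then obtain r where r: "?D * (xt - (-13)) = r^2" using halving[OF d cp yp, of xt yt "-13"] by (auto simp: ec_rhs_def)
  from O4 show False
  proof (elim disjE conjE)
    assume "d = 1" "(xt,yt) \<in> {(-8,20),(-8,-20),(32,180),(32,-180)}"
    then have "xt = -8 \<or> xt = 32" by auto
    then show False
    proof
      assume "xt = -8" then have "(of_int 5 :: rat) = r^2" using r \<open>d = 1\<close> by simp
      then show False by (rule not_rat_sq) simp
    next
      assume "xt = 32" then have "(of_int 45 :: rat) = r^2" using r \<open>d = 1\<close> by simp
      then show False by (rule not_rat_sq) simp
    qed
  next
    assume "d = -1" "(xt,yt) \<in> {(2,30),(2,-30),(-28,120),(-28,-120)}"
    then have "xt = 2 \<or> xt = -28" by auto
    then show False
    proof
      assume "xt = 2" then have "r^2 = -15" using r \<open>d = -1\<close> by simp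
      moreover have "r^2 \<ge> 0" by simp
      ultimately show False by simp
    next
      assume "xt = -28" then have "(of_int 15 :: rat) = r^2" using r \<open>d = -1\<close> by simp
      then show False by (rule not_rat_sq) simp
    qed
  qed
qed

lemma pow4:
  fixes n :: nat
  assumes sq: "squarefree d"
  shows "P \<in> carrier (ec_group d) \<Longrightarrow> n > 0 \<Longrightarrow> P [^]\<^bsub>ec_group d\<^esub> n = None \<Longrightarrow>
         P [^]\<^bsub>ec_group d\<^esub> (4::nat) = None"
proof (induction n arbitrary: P rule: less_induct)
  case (less n P)
  let ?G = "ec_group d"
  have d: "d \<noteq> 0" using sqf_nonzero[OF sq] .
  interpret G: comm_group ?G by (rule ec_comm_group[OF d])
  have PG: "P \<in> carrier ?G" using less by simp
  show ?case
  proof (cases "even n")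
    case True
    then obtain m where m: "n = 2*m" by blast
    have m0: "m > 0" "m < n" using m less by auto
    define Q where "Q = P [^]\<^bsub>?G\<^esub> (2::nat)"
    have QG: "Q \<in> carrier ?G" unfolding Q_def by (rule G.nat_pow_closed[OF PG])
    have "Q [^]\<^bsub>?G\<^esub> m = P [^]\<^bsub>?G\<^esub> n" unfolding Q_def m using G.nat_pow_pow[OF PG] by simp
    then have "Q [^]\<^bsub>?G\<^esub> (4::nat) = None" using less.IH[OF m0(2) QG m0(1)] less by simp
    then have "P [^]\<^bsub>?G\<^esub> (8::nat) = None" unfolding Q_def using G.nat_pow_pow[OF PG, of 2 4] by simp
    then show ?thesis using no_order8[OF sq PG] by simp
  next
    case False
    show ?thesis
    proof (cases "n = 1")
      case True
      then have "P = None" using less PG by simp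
      then show ?thesis using G.nat_pow_one by simp
    next
      case n1: False
      obtain l where l: "prime l" "l dvd n" using prime_factor_nat[of n] n1 by blast
      have lodd: "odd l" using l False by (meson dvd_trans)
      obtain m where m: "n = l*m" using l by blast
      have m0: "m > 0" using m less by (metis gr0I mult_0_right)
      have mn: "m < n" using m l m0 prime_gt_1_nat by simp
      define Q where "Q = P [^]\<^bsub>?G\<^esub> m"
      have QG: "Q \<in> carrier ?G" unfolding Q_def by (rule G.nat_pow_closed[OF PG])
      have "Q [^]\<^bsub>?G\<^esub> l = P [^]\<^bsub>?G\<^esub> (m*l)" unfolding Q_def using G.nat_pow_pow[OF PG, of m l] by simp
      also have "m*l = n" using m by simp
      finally have Ql: "Q [^]\<^bsub>?G\<^esub> l = None" using less by simp
      have "Q = None"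
      proof (rule ccontr)
        assume QN: "Q \<noteq> None"
        obtain x y where Qe: "Q = Some (x,y)" using QN by (cases Q) auto
        have cq: "of_int d * y^2 = ec_rhs x" using QG Qe by (simp add: on_curve_def)
        show False
        proof (cases "y = 0")
          case True
          have Q2: "Q [^]\<^bsub>?G\<^esub> (2::nat) = None" using Qe True QG by (simp add: numeral_2_eq_2)
          obtain k where k: "l = 2*k + 1" using lodd by (metis oddE)
          have "Q [^]\<^bsub>?G\<^esub> l = (Q [^]\<^bsub>?G\<^esub> (2::nat)) [^]\<^bsub>?G\<^esub> k \<otimes>\<^bsub>?G\<^esub> Q"
            unfolding k using G.nat_pow_pow[OF QG, of 2 k] G.nat_pow_Suc[of Q "2*k"] by simp
          also have "\<dots> = Q" unfolding Q2 using G.nat_pow_one QG by simp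
          finally show False using Ql QN by simp
        next
          case False
          have "ec_mul d l (Some (x,y)) = None" using Ql ec_mul_pow[OF d, of Q l] QG Qe by simp
          then show False using no_odd_torsion[OF sq cq False l(1) lodd] by simp
        qed
      qed
      then show ?thesis using less.IH[OF mn PG m0] Q_def by simp
    qed
  qed
qed


definition T2 :: "(rat\<times>rat) option set" where "T2 = {None, Some(-13,0), Some(-4,0), Some(12,0)}"
definition T4p :: "(rat\<times>rat) option set" where "T4p = {Some(-8,20), Some(-8,-20), Some(32,180), Some(32,-180)}"
definition T4m :: "(rat\<times>rat) option set" where "T4m = {Some(2,30), Some(2,-30), Some(-28,120), Some(-28,-120)}"

definition Sd :: "int \<Rightarrow> (rat\<times>rat) option set" where
  "Sd d = T2 \<union> (if d = 1 then T4p else if d = -1 then T4m else {})"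

lemma carrier_tors: "carrier (ec_tors d) = {P. on_curve d P \<and> (\<exists>n>0. ec_mul d n P = None)}"
  by (simp add: ec_tors_def)

lemma mult_tors: "monoid.mult (ec_tors d) = ec_add d"
  by (simp add: ec_tors_def)

lemma T2_tors: "P \<in> T2 \<Longrightarrow> on_curve d P \<and> ec_mul d 2 P = None"
  by (auto simp: T2_def on_curve_def ec_rhs_def numeral_2_eq_2)

lemma T4p_tors: "P \<in> T4p \<Longrightarrow> on_curve 1 P \<and> ec_mul 1 4 P = None"
  unfolding T4p_def by (auto; code_simp)

lemma T4m_tors: "P \<in> T4m \<Longrightarrow> on_curve (-1) P \<and> ec_mul (-1) 4 P = None"
  unfolding T4m_def by (auto; code_simp)

lemma tors_carrier:
  assumes sq: "squarefree d" shows "carrier (ec_tors d) = Sd d"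
proof
  let ?G = "ec_group d"
  have d: "d \<noteq> 0" using sqf_nonzero[OF sq] .
  interpret G: comm_group ?G by (rule ec_comm_group[OF d])
  show "carrier (ec_tors d) \<subseteq> Sd d"
  proof
    fix P assume "P \<in> carrier (ec_tors d)"
    then obtain n where P: "on_curve d P" and n: "n > 0" "ec_mul d n P = None" by (auto simp: carrier_tors)
    have PG: "P \<in> carrier ?G" using P by simp
    have "P [^]\<^bsub>?G\<^esub> n = None" using n ec_mul_pow[OF d P] by simp
    then have P4: "P [^]\<^bsub>?G\<^esub> (4::nat) = None" using pow4[OF sq PG n(1)] by simp
    define Q where "Q = ec_add d P P"
    have QP: "Q = P [^]\<^bsub>?G\<^esub> (2::nat)" unfolding Q_def using PG by (simp add: numeral_2_eq_2)
    have QG: "Q \<in> carrier ?G" unfolding QP by (rule G.nat_pow_closed[OF PG])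
    have "ec_add d Q Q = Q [^]\<^bsub>?G\<^esub> (2::nat)" using QG by (simp add: numeral_2_eq_2)
    also have "\<dots> = P [^]\<^bsub>?G\<^esub> (2*2::nat)" unfolding QP using G.nat_pow_pow[OF PG] by simp
    finally have QQ: "ec_add d Q Q = None" using P4 by simp
    have rr: "ec_rhs e = 0 \<Longrightarrow> Some (e, 0) \<in> T2" for e using rhs_roots[of e] by (auto simp: T2_def)
    from two_tors[OF d _ QQ] QG consider "Q = None" | e where "Q = Some (e,0)" "ec_rhs e = 0" by auto
    then show "P \<in> Sd d"
    proof cases
      case 1
      from two_tors[OF d P] 1 have "P = None \<or> (\<exists>e. P = Some (e,0) \<and> ec_rhs e = 0)" unfolding Q_def by simp
      then show ?thesis using rr by (auto simp: Sd_def T2_def)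
    next
      case 2
      have PN: "P \<noteq> None"
      proof
        assume "P = None" then have "Q = None" unfolding Q_def by simp
        then show False using 2 by simp
      qed
      obtain x y where Pe: "P = Some (x,y)" using PN by (cases P) auto
      have c: "of_int d * y^2 = ec_rhs x" using P Pe by (simp add: on_curve_def)
      have "ec_add d (Some (x,y)) (Some (x,y)) = Some (e,0)" using 2 Pe Q_def by simp
      from order4[OF sq c this] show ?thesis using Pe by (auto simp: Sd_def T4p_def T4m_def)
    qed
  qed
next
  show "Sd d \<subseteq> carrier (ec_tors d)"
  proof
    fix P assume P: "P \<in> Sd d"
    show "P \<in> carrier (ec_tors d)"
    proof (cases "P \<in> T2")
      case True then show ?thesis using T2_tors[of P d] by (auto simp: carrier_tors intro: exI[of _ 2])
    next
      case False
      then have "(d = 1 \<and> P \<in> T4p) \<or> (d = -1 \<and> P \<in> T4m)" using P by (auto simp: Sd_def split: if_splits)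
      then show ?thesis using T4p_tors[of P] T4m_tors[of P] by (auto simp: carrier_tors intro: exI[of _ 4])
    qed
  qed
qed


lemma DirProd_mult_mod:
  "monoid.mult (DirProd (integer_mod_group n) (integer_mod_group k)) u v =
     ((fst u + fst v) mod int n, (snd u + snd v) mod int k)"
  by (cases u; cases v) (simp add: DirProd_def)

lemma carrier_DirProd_mod:
  "n > 0 \<Longrightarrow> k > 0 \<Longrightarrow> carrier (DirProd (integer_mod_group n) (integer_mod_group k)) = {0..<int n} \<times> {0..<int k}"
  by (simp add: DirProd_def carrier_integer_mod_group)

lemma iso_tab:
  assumes cG: "carrier G = A" and fin: "finite A" and img: "h ` A = carrier H"
    and cd: "card A = card (carrier H)"
    and hm: "\<And>x y. x \<in> A \<Longrightarrow> y \<in> A \<Longrightarrow> h (x \<otimes>\<^bsub>G\<^esub> y) = h x \<otimes>\<^bsub>H\<^esub> h y"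
  shows "G \<cong> H"
proof -
  have "card (h ` A) = card A" using img cd by simp
  then have inj: "inj_on h A" by (rule eq_card_imp_inj_on[OF fin])
  have "h \<in> iso G H"
    unfolding iso_def hom_def bij_betw_def using cG img inj hm by auto
  then show ?thesis unfolding is_iso_def by blast
qed

definition h1 :: "(rat\<times>rat) option \<Rightarrow> int \<times> int" where
 "h1 P = (if P = Some (-13,0) then (0,1) else if P = Some (-8,20) then (1,0) else if P = Some (32,-180) then (1,1)
   else if P = Some (12,0) then (2,0) else if P = Some (-4,0) then (2,1) else if P = Some (-8,-20) then (3,0)
   else if P = Some (32,180) then (3,1) else (0,0))"

definition hm :: "(rat\<times>rat) option \<Rightarrow> int \<times> int" where
 "hm P = (if P = Some (12,0) then (0,1) else if P = Some (2,30) then (1,0) else if P = Some (-28,-120) then (1,1)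
   else if P = Some (-13,0) then (2,0) else if P = Some (-4,0) then (2,1) else if P = Some (2,-30) then (3,0)
   else if P = Some (-28,120) then (3,1) else (0,0))"

definition h0 :: "(rat\<times>rat) option \<Rightarrow> int \<times> int" where
 "h0 P = (if P = Some (-13,0) then (1,0) else if P = Some (-4,0) then (0,1) else if P = Some (12,0) then (1,1) else (0,0))"

lemma S1: "Sd 1 = {None, Some(-13,0), Some(-4,0), Some(12,0), Some(-8,20), Some(-8,-20), Some(32,180), Some(32,-180)}"
  by (auto simp: Sd_def T2_def T4p_def)

lemma Sm1: "Sd (-1) = {None, Some(-13,0), Some(-4,0), Some(12,0), Some(2,30), Some(2,-30), Some(-28,120), Some(-28,-120)}"
  by (auto simp: Sd_def T2_def T4m_def)

lemma S0: "d \<noteq> 1 \<Longrightarrow> d \<noteq> -1 \<Longrightarrow> Sd d = {None, Some(-13,0), Some(-4,0), Some(12,0)}"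
  by (auto simp: Sd_def T2_def)

lemma h1_hom: "\<forall>x\<in>{None, Some(-13,0), Some(-4,0), Some(12,0), Some(-8,20), Some(-8,-20), Some(32,180), Some(32,-180)}.
  \<forall>y\<in>{None, Some(-13,0), Some(-4,0), Some(12,0), Some(-8,20), Some(-8,-20), Some(32,180), Some(32,-180)}.
   h1 (ec_add 1 x y) = ((fst (h1 x) + fst (h1 y)) mod 4, (snd (h1 x) + snd (h1 y)) mod 2)"
  by code_simp

lemma hm_hom: "\<forall>x\<in>{None, Some(-13,0), Some(-4,0), Some(12,0), Some(2,30), Some(2,-30), Some(-28,120), Some(-28,-120)}.
  \<forall>y\<in>{None, Some(-13,0), Some(-4,0), Some(12,0), Some(2,30), Some(2,-30), Some(-28,120), Some(-28,-120)}.
   hm (ec_add (-1) x y) = ((fst (hm x) + fst (hm y)) mod 4, (snd (hm x) + snd (hm y)) mod 2)"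
  by code_simp

lemma h0_hom: "\<forall>x\<in>{None, Some(-13,0), Some(-4,0), Some(12::rat,0::rat)}. \<forall>y\<in>{None, Some(-13,0), Some(-4,0), Some(12,0)}.
   h0 (ec_add d x y) = ((fst (h0 x) + fst (h0 y)) mod 2, (snd (h0 x) + snd (h0 y)) mod 2)"
  by (simp add: h0_def Let_def)

lemma h1_img: "h1 ` {None, Some(-13,0), Some(-4,0), Some(12,0), Some(-8,20), Some(-8,-20), Some(32,180), Some(32,-180)}
   = {0..<4} \<times> {0..<2}"
  by code_simp

lemma hm_img: "hm ` {None, Some(-13,0), Some(-4,0), Some(12,0), Some(2,30), Some(2,-30), Some(-28,120), Some(-28,-120)}
   = {0..<4} \<times> {0..<2}"
  by code_simp

lemma h0_img: "h0 ` {None, Some(-13,0), Some(-4,0), Some(12,0)} = {0..<2} \<times> {0..<2}"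
  by code_simp


definition Ap :: "(rat\<times>rat) option set" where "Ap = {None, Some(-13,0), Some(-4,0), Some(12,0), Some(-8,20), Some(-8,-20), Some(32,180), Some(32,-180)}"
definition Am :: "(rat\<times>rat) option set" where "Am = {None, Some(-13,0), Some(-4,0), Some(12,0), Some(2,30), Some(2,-30), Some(-28,120), Some(-28,-120)}"
definition A0 :: "(rat\<times>rat) option set" where "A0 = {None, Some(-13,0), Some(-4,0), Some(12,0)}"

lemma card8p: "card Ap = 8"
  unfolding Ap_def by code_simp
lemma card8m: "card Am = 8"
  unfolding Am_def by code_simp
lemma card4: "card A0 = 4"
  unfolding A0_def by code_simp

lemma iso_p: "ec_tors 1 \<cong> DirProd (integer_mod_group 4) (integer_mod_group 2)"
proof (rule iso_tab[where h = h1])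
  have sq: "squarefree (1::int)" by simp
  show "carrier (ec_tors 1) = Ap"
    using tors_carrier[OF sq] S1 unfolding Ap_def by simp
  show "finite Ap" unfolding Ap_def by simp
  show "h1 ` Ap =
     carrier (DirProd (integer_mod_group 4) (integer_mod_group 2))"
    using h1_img carrier_DirProd_mod[of 4 2] unfolding Ap_def by simp
  show "card Ap =
     card (carrier (DirProd (integer_mod_group 4) (integer_mod_group 2)))"
    using card8p carrier_DirProd_mod[of 4 2] by simp
  fix x y assume xy: "x \<in> Ap" "y \<in> Ap"
  then show "h1 (x \<otimes>\<^bsub>ec_tors 1\<^esub> y) = h1 x \<otimes>\<^bsub>DirProd (integer_mod_group 4) (integer_mod_group 2)\<^esub> h1 y"
  proof -
    have "h1 (ec_add 1 x y) = ((fst (h1 x) + fst (h1 y)) mod 4, (snd (h1 x) + snd (h1 y)) mod 2)"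
      using h1_hom xy unfolding Ap_def by blast
    then show ?thesis unfolding mult_tors DirProd_mult_mod by simp
  qed
qed

lemma iso_m: "ec_tors (-1) \<cong> DirProd (integer_mod_group 4) (integer_mod_group 2)"
proof (rule iso_tab[where h = hm])
  have sq: "squarefree (-1::int)" by simp
  show "carrier (ec_tors (-1)) = Am"
    using tors_carrier[OF sq] Sm1 unfolding Am_def by simp
  show "finite Am" unfolding Am_def by simp
  show "hm ` Am =
     carrier (DirProd (integer_mod_group 4) (integer_mod_group 2))"
    using hm_img carrier_DirProd_mod[of 4 2] unfolding Am_def by simp
  show "card Am =
     card (carrier (DirProd (integer_mod_group 4) (integer_mod_group 2)))"
    using card8m carrier_DirProd_mod[of 4 2] by simp
  fix x y assume xy: "x \<in> Am" "y \<in> Am"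
  then show "hm (x \<otimes>\<^bsub>ec_tors (-1)\<^esub> y) = hm x \<otimes>\<^bsub>DirProd (integer_mod_group 4) (integer_mod_group 2)\<^esub> hm y"
  proof -
    have "hm (ec_add (-1) x y) = ((fst (hm x) + fst (hm y)) mod 4, (snd (hm x) + snd (hm y)) mod 2)"
      using hm_hom xy unfolding Am_def by blast
    then show ?thesis unfolding mult_tors DirProd_mult_mod by simp
  qed
qed

lemma iso_0:
  assumes sq: "squarefree d" and d1: "d \<noteq> 1" and d2: "d \<noteq> -1"
  shows "ec_tors d \<cong> DirProd (integer_mod_group 2) (integer_mod_group 2)"
proof (rule iso_tab[where h = h0])
  show "carrier (ec_tors d) = A0"
    using tors_carrier[OF sq] S0[OF d1 d2] unfolding A0_def by simp
  show "finite A0" unfolding A0_def by simp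
  show "h0 ` A0 = carrier (DirProd (integer_mod_group 2) (integer_mod_group 2))"
    using h0_img carrier_DirProd_mod[of 2 2] unfolding A0_def by simp
  show "card A0 = card (carrier (DirProd (integer_mod_group 2) (integer_mod_group 2)))"
    using card4 carrier_DirProd_mod[of 2 2] by simp
  fix x y assume xy: "x \<in> A0" "y \<in> A0"
  then show "h0 (x \<otimes>\<^bsub>ec_tors d\<^esub> y) = h0 x \<otimes>\<^bsub>DirProd (integer_mod_group 2) (integer_mod_group 2)\<^esub> h0 y"
  proof -
    have "h0 (ec_add d x y) = ((fst (h0 x) + fst (h0 y)) mod 2, (snd (h0 x) + snd (h0 y)) mod 2)"
      using h0_hom[of d] xy unfolding A0_def by blast
    then show ?thesis unfolding mult_tors DirProd_mult_mod by simp
  qed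
qed

lemma all_lt4: "(\<forall>m::nat. 0 < m \<and> m < 4 \<longrightarrow> Q m) \<longleftrightarrow> Q 1 \<and> Q 2 \<and> Q 3"
proof
  assume "Q 1 \<and> Q 2 \<and> Q 3"
  then show "\<forall>m::nat. 0 < m \<and> m < 4 \<longrightarrow> Q m"
    by (auto simp: less_Suc_eq numeral_eq_Suc)
qed auto

lemma ord4_p: "{P. on_curve 1 P \<and> has_order 1 P 4} = {Some (-8, 20), Some (-8, -20), Some (32, 180), Some (32, -180)}"
proof
  have sq: "squarefree (1::int)" by simp
  show "{P. on_curve 1 P \<and> has_order 1 P 4} \<subseteq> {Some (-8, 20), Some (-8, -20), Some (32, 180), Some (32, -180)}"
  proof
    fix P assume P: "P \<in> {P. on_curve 1 P \<and> has_order 1 P 4}"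
    then have "P \<in> carrier (ec_tors 1)" unfolding carrier_tors has_order_def by (auto intro: exI[of _ 4])
    then have PS: "P \<in> Ap"
      using tors_carrier[OF sq] S1 unfolding Ap_def by simp
    have n12: "ec_mul 1 1 P \<noteq> None" "ec_mul 1 2 P \<noteq> None" using P unfolding has_order_def by auto
    have "\<forall>Q \<in> Ap.
       ec_mul 1 1 Q \<noteq> None \<and> ec_mul 1 2 Q \<noteq> None \<longrightarrow> Q \<in> {Some (-8, 20), Some (-8, -20), Some (32, 180), Some (32, -180)}"
      unfolding Ap_def by code_simp
    then show "P \<in> {Some (-8, 20), Some (-8, -20), Some (32, 180), Some (32, -180)}" using PS n12 by blast
  qed
  show "{Some (-8, 20), Some (-8, -20), Some (32, 180), Some (32, -180)} \<subseteq> {P. on_curve 1 P \<and> has_order 1 P 4}"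
  proof -
    have "\<forall>Q \<in> {Some (-8, 20), Some (-8, -20), Some (32, 180), Some (32, -180::rat)}.
       on_curve 1 Q \<and> ec_mul 1 4 Q = None \<and> ec_mul 1 1 Q \<noteq> None \<and> ec_mul 1 2 Q \<noteq> None \<and> ec_mul 1 3 Q \<noteq> None"
      by code_simp
    then show ?thesis unfolding has_order_def all_lt4 by auto
  qed
qed

lemma ord4_m: "{P. on_curve (-1) P \<and> has_order (-1) P 4} = {Some (2, 30), Some (2, -30), Some (-28, 120), Some (-28, -120)}"
proof
  have sq: "squarefree (-1::int)" by simp
  show "{P. on_curve (-1) P \<and> has_order (-1) P 4} \<subseteq> {Some (2, 30), Some (2, -30), Some (-28, 120), Some (-28, -120)}"
  proof
    fix P assume P: "P \<in> {P. on_curve (-1) P \<and> has_order (-1) P 4}"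
    then have "P \<in> carrier (ec_tors (-1))" unfolding carrier_tors has_order_def by (auto intro: exI[of _ 4])
    then have PS: "P \<in> Am"
      using tors_carrier[OF sq] Sm1 unfolding Am_def by simp
    have n12: "ec_mul (-1) 1 P \<noteq> None" "ec_mul (-1) 2 P \<noteq> None" using P unfolding has_order_def by auto
    have "\<forall>Q \<in> Am.
       ec_mul (-1) 1 Q \<noteq> None \<and> ec_mul (-1) 2 Q \<noteq> None \<longrightarrow> Q \<in> {Some (2, 30), Some (2, -30), Some (-28, 120), Some (-28, -120)}"
      unfolding Am_def by code_simp
    then show "P \<in> {Some (2, 30), Some (2, -30), Some (-28, 120), Some (-28, -120)}" using PS n12 by blast
  qed
  show "{Some (2, 30), Some (2, -30), Some (-28, 120), Some (-28, -120)} \<subseteq> {P. on_curve (-1) P \<and> has_order (-1) P 4}"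
  proof -
    have "\<forall>Q \<in> {Some (2, 30), Some (2, -30), Some (-28, 120), Some (-28, -120::rat)}.
       on_curve (-1) Q \<and> ec_mul (-1) 4 Q = None \<and> ec_mul (-1) 1 Q \<noteq> None \<and> ec_mul (-1) 2 Q \<noteq> None \<and> ec_mul (-1) 3 Q \<noteq> None"
      by code_simp
    then show ?thesis unfolding has_order_def all_lt4 by auto
  qed
qed

theorem proposition3p4:
  fixes d :: int
  assumes "squarefree d"
  shows "(d \<in> {1, -1} \<longrightarrow>
            ec_tors d \<cong> DirProd (integer_mod_group 4) (integer_mod_group 2))
       \<and> (d \<notin> {1, -1} \<longrightarrow>
            ec_tors d \<cong> DirProd (integer_mod_group 2) (integer_mod_group 2))
       \<and> (d = 1 \<longrightarrow> {P. on_curve d P \<and> has_order d P 4} =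
            {Some (-8, 20), Some (-8, -20), Some (32, 180), Some (32, -180)})
       \<and> (d = -1 \<longrightarrow> {P. on_curve d P \<and> has_order d P 4} =
            {Some (2, 30), Some (2, -30), Some (-28, 120), Some (-28, -120)})"
  using iso_p iso_m iso_0[OF assms] ord4_p ord4_m by auto


end
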